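(* Let $k\ge 0$ be an integer and $\mathrm{R}\in\{\mathrm{J},\mathrm{S},\mathrm{AR}\}$. (i) If $\mathrm{R}=\mathrm{S}$ and $k=1$, or if $\mathrm{R}=\mathrm{AR}$ and $k\in\{0,1\}$, then every finite graph $G$ is determined up to isomorphism by $\mathcal{I}^k_{\mathrm{R}}(G)$, i.e. for finite graphs $G,G'$, $\mathcal{I}^k_{\mathrm{R}}(G)\cong\mathcal{I}^k_{\mathrm{R}}(G')$ implies $G\cong G'$. (ii) For every other pair $(\mathrm{R},k)$, there exist non-isomorphic finite graphs $G,G'$ with $\mathcal{I}^k_{\mathrm{R}}(G)\cong\mathcal{I}^k_{\mathrm{R}}(G')$.
   Context: All graphs are finite and simple; an independent set is a set of pairwise non-adjacent vertices. $\mathcal{I}^k_{\mathrm{J}}(G)$ (Token Jumping) has as vertices the independent sets of $G$ of size exactly $k$, with $I,J$ adjacent iff $I\setminus J=\{u\}$ and $J\setminus I=\{v\}$ for some vertices $u\neq v$. $\mathcal{I}^k_{\mathrm{S}}(G)$ (Token Sliding) has the same vertices, with $I,J$ adjacent iff $I\setminus J=\{u\}$, $J\setminus I=\{v\}$ and $uv\in E(G)$. $\mathcal{I}^k_{\mathrm{AR}}(G)$ (Token Addition and Removal) has as vertices the independent sets of $G$ of size at least $k$, with $I,J$ adjacent iff their symmetric difference has exactly one element. *)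

theory Defs
  imports Main
begin

definition fgraph :: "'a set \<Rightarrow> ('a \<times> 'a) set \<Rightarrow> bool" where
  "fgraph V E \<longleftrightarrow> finite V \<and> E \<subseteq> V \<times> V \<and> sym E \<and> (\<forall>x. (x, x) \<notin> E)"

definition graph_iso :: "'a set \<Rightarrow> ('a \<times> 'a) set \<Rightarrow> 'b set \<Rightarrow> ('b \<times> 'b) set \<Rightarrow> bool" where
  "graph_iso V E V' E' \<longleftrightarrow>
     (\<exists>f. bij_betw f V V' \<and> (\<forall>x\<in>V. \<forall>y\<in>V. (x, y) \<in> E \<longleftrightarrow> (f x, f y) \<in> E'))"

definition indep :: "'a set \<Rightarrow> ('a \<times> 'a) set \<Rightarrow> 'a set \<Rightarrow> bool" where
  "indep V E I \<longleftrightarrow> I \<subseteq> V \<and> (\<forall>x\<in>I. \<forall>y\<in>I. (x, y) \<notin> E)"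

datatype rule = TJ | TS | TAR

fun rverts :: "rule \<Rightarrow> 'a set \<Rightarrow> ('a \<times> 'a) set \<Rightarrow> nat \<Rightarrow> 'a set set" where
  "rverts TJ V E k = {I. indep V E I \<and> card I = k}"
| "rverts TS V E k = {I. indep V E I \<and> card I = k}"
| "rverts TAR V E k = {I. indep V E I \<and> card I \<ge> k}"

fun redges :: "rule \<Rightarrow> 'a set \<Rightarrow> ('a \<times> 'a) set \<Rightarrow> nat \<Rightarrow> ('a set \<times> 'a set) set" where
  "redges TJ V E k = {(I, J). I \<in> rverts TJ V E k \<and> J \<in> rverts TJ V E k \<and>
       (\<exists>u v. u \<noteq> v \<and> I - J = {u} \<and> J - I = {v})}"
| "redges TS V E k = {(I, J). I \<in> rverts TS V E k \<and> J \<in> rverts TS V E k \<and>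
       (\<exists>u v. I - J = {u} \<and> J - I = {v} \<and> (u, v) \<in> E)}"
| "redges TAR V E k = {(I, J). I \<in> rverts TAR V E k \<and> J \<in> rverts TAR V E k \<and>
       (\<exists>x. (I - J) \<union> (J - I) = {x})}"

end

theory Submission
  imports Defs
begin


definition nb :: "('a \<times> 'a) set \<Rightarrow> 'a \<Rightarrow> 'a set" where
  "nb R u = {w. (u, w) \<in> R}"

definition reg2 :: "'a set \<Rightarrow> ('a \<times> 'a) set \<Rightarrow> bool" where
  "reg2 W R \<longleftrightarrow> finite W \<and> R \<subseteq> W \<times> W \<and> (\<forall>x y. (x, y) \<in> R \<longrightarrow> (y, x) \<in> R)
     \<and> (\<forall>x. (x, x) \<notin> R) \<and> (\<forall>u\<in>W. card (nb R u) = 2)"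

definition orient :: "'a set \<Rightarrow> ('a \<times> 'a) set \<Rightarrow> ('a \<Rightarrow> 'a) \<Rightarrow> bool" where
  "orient W R s \<longleftrightarrow> (\<forall>u\<in>W. s u \<in> W \<and> (u, s u) \<in> R \<and> s (s u) \<noteq> u) \<and> inj_on s W"

lemma card2_obtain:
  assumes "card X = 2"
  obtains a b where "a \<noteq> b" "X = {a, b}"
proof -
  obtain a b where "X = {a, b}" "a \<noteq> b" using assms card_2_iff[of X] by auto
  then show ?thesis using that by blast
qed

lemma nb_sub: "reg2 W R \<Longrightarrow> nb R u \<subseteq> W"
  unfolding reg2_def nb_def by auto

lemma card2_eq:
  assumes "card X = 2" "a \<in> X" "b \<in> X" "a \<noteq> b"
  shows "X = {a, b}"
proof -
  have fX: "finite X"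
  proof (rule ccontr)
    assume "\<not> finite X"
    then have "card X = 0" by simp
    then show False using assms(1) by simp
  qed
  have s: "{a, b} \<subseteq> X" using assms(2,3) by blast
  have "card {a, b} = card X" using assms(1,4) by simp
  then have "{a, b} = X" using card_subset_eq[OF fX s] by blast
  then show ?thesis by simp
qed

lemma orient_step_tri:
  fixes W :: "'a set" and R :: "('a \<times> 'a) set"
  assumes R: "reg2 W R" and v: "v \<in> W" and nbv: "nb R v = {a, b}" and ab: "a \<noteq> b" and abR: "(a, b) \<in> R"
    and IH: "\<And>(W' :: 'a set) R'. card W' < card W \<Longrightarrow> reg2 W' R' \<Longrightarrow> \<exists>s. orient W' R' s"
  shows "\<exists>s. orient W R s"
proof -
  have fin: "finite W" and sub: "R \<subseteq> W \<times> W" and sym: "\<And>x y. (x, y) \<in> R \<Longrightarrow> (y, x) \<in> R"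
    and irr: "\<And>x. (x, x) \<notin> R" and deg: "\<And>u. u \<in> W \<Longrightarrow> card (nb R u) = 2"
    using R unfolding reg2_def by auto
  have vaR: "(v, a) \<in> R" and vbR: "(v, b) \<in> R" using nbv unfolding nb_def by auto
  have aW: "a \<in> W" and bW: "b \<in> W" using vaR vbR sub by auto
  have av: "a \<noteq> v" and bv: "b \<noteq> v" using vaR vbR irr by auto
  have nba: "nb R a = {v, b}"
    using card2_eq[OF deg[OF aW], of v b] sym[OF vaR] abR bv unfolding nb_def by auto
  have nbb: "nb R b = {v, a}"
    using card2_eq[OF deg[OF bW], of v a] sym[OF vbR] sym[OF abR] av unfolding nb_def by auto
  define W0 where "W0 = W - {v, a, b}"
  define R0 where "R0 = R \<inter> (W0 \<times> W0)"
  have nb0: "nb R0 x = nb R x" if x: "x \<in> W0" for x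
  proof -
    have "w \<in> W0" if "(x, w) \<in> R" for w
    proof -
      have "w \<in> W" using that sub by auto
      moreover have "w \<notin> {v, a, b}"
      proof
        assume "w \<in> {v, a, b}"
        then have "x \<in> nb R w" using sym[OF that] unfolding nb_def by auto
        then have "x \<in> {v, a, b}" using nbv nba nbb \<open>w \<in> {v, a, b}\<close> by auto
        then show False using x unfolding W0_def by blast
      qed
      ultimately show ?thesis unfolding W0_def by blast
    qed
    then show ?thesis using x unfolding nb_def R0_def by auto
  qed
  have reg0: "reg2 W0 R0"
    unfolding reg2_def
  proof (intro conjI allI impI ballI)
    show "finite W0" unfolding W0_def using fin by simp
    show "R0 \<subseteq> W0 \<times> W0" unfolding R0_def by blast
    fix x y assume "(x, y) \<in> R0" then show "(y, x) \<in> R0" unfolding R0_def using sym by blast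
  next
    fix x show "(x, x) \<notin> R0" unfolding R0_def using irr by blast
  next
    fix u assume "u \<in> W0" then show "card (nb R0 u) = 2" using nb0 deg unfolding W0_def by auto
  qed
  have lt: "card W0 < card W" unfolding W0_def using fin v by (intro psubset_card_mono) auto
  obtain s0 where s0: "orient W0 R0 s0" using IH[OF lt reg0] by blast
  define s where "s x = (if x = v then a else if x = a then b else if x = b then v else s0 x)" for x
  have s0W: "\<And>u. u \<in> W0 \<Longrightarrow> s0 u \<in> W0 \<and> (u, s0 u) \<in> R0 \<and> s0 (s0 u) \<noteq> u"
    using s0 unfolding orient_def by blast
  have s0inj: "inj_on s0 W0" using s0 unfolding orient_def by blast
  have W0d: "\<And>u. u \<in> W0 \<Longrightarrow> u \<noteq> v \<and> u \<noteq> a \<and> u \<noteq> b \<and> u \<in> W" unfolding W0_def by blast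
  have Wcases: "\<And>u. u \<in> W \<Longrightarrow> u = v \<or> u = a \<or> u = b \<or> u \<in> W0" unfolding W0_def by blast
  have part1: "s u \<in> W \<and> (u, s u) \<in> R \<and> s (s u) \<noteq> u" if u: "u \<in> W" for u
  proof -
    consider "u = v" | "u = a" | "u = b" | "u \<in> W0" using Wcases[OF u] by blast
    then show ?thesis
    proof cases
      case 1 then show ?thesis unfolding s_def using aW vaR av ab bv by auto
    next
      case 2 then show ?thesis unfolding s_def using bW abR av ab bv by auto
    next
      case 3 then show ?thesis unfolding s_def using v vbR sym av ab bv by auto
    next
      case 4
      have "s u = s0 u" unfolding s_def using W0d[OF 4] by simp
      moreover have "s (s0 u) = s0 (s0 u)" unfolding s_def using W0d s0W[OF 4] by auto
      ultimately show ?thesis using s0W[OF 4] W0d unfolding R0_def by auto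
    qed
  qed
  have "inj_on s W"
  proof (rule inj_onI)
    fix x y assume xy: "x \<in> W" "y \<in> W" "s x = s y"
    have sx: "\<And>u. u \<in> W0 \<Longrightarrow> s u = s0 u" unfolding s_def using W0d by auto
    have sW0: "\<And>u. u \<in> W0 \<Longrightarrow> s u \<in> W0" using sx s0W by auto
    have sv: "s v = a" "s a = b" "s b = v" unfolding s_def using ab av bv by auto
    have nW0: "v \<notin> W0" "a \<notin> W0" "b \<notin> W0" unfolding W0_def by auto
    show "x = y"
    proof (cases "x \<in> W0")
      case True
      show ?thesis
      proof (cases "y \<in> W0")
        case True
        then show ?thesis using \<open>x \<in> W0\<close> xy(3) sx inj_onD[OF s0inj] by metis
      next
        case False
        then have "y = v \<or> y = a \<or> y = b" using Wcases[OF xy(2)] by blast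
        then have "s y \<notin> W0" using sv nW0 by auto
        then show ?thesis using sW0[OF True] xy(3) by simp
      qed
    next
      case False
      then have x3: "x = v \<or> x = a \<or> x = b" using Wcases[OF xy(1)] by blast
      show ?thesis
      proof (cases "y \<in> W0")
        case True
        then have "s x \<notin> W0" using x3 sv nW0 by auto
        then show ?thesis using sW0[OF True] xy(3) by simp
      next
        case False
        then have "y = v \<or> y = a \<or> y = b" using Wcases[OF xy(2)] by blast
        then show ?thesis using x3 xy(3) sv ab av bv by auto
      qed
    qed
  qed
  then show ?thesis using part1 unfolding orient_def by blast
qed

lemma orient_step_path:
  fixes W :: "'a set" and R :: "('a \<times> 'a) set"
  assumes R: "reg2 W R" and v: "v \<in> W" and nbv: "nb R v = {a, b}" and ab: "a \<noteq> b" and abR: "(a, b) \<notin> R"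
    and IH: "\<And>(W' :: 'a set) R'. card W' < card W \<Longrightarrow> reg2 W' R' \<Longrightarrow> \<exists>s. orient W' R' s"
  shows "\<exists>s. orient W R s"
proof -
  have fin: "finite W" and sub: "R \<subseteq> W \<times> W" and sym: "\<And>x y. (x, y) \<in> R \<Longrightarrow> (y, x) \<in> R"
    and irr: "\<And>x. (x, x) \<notin> R" and deg: "\<And>u. u \<in> W \<Longrightarrow> card (nb R u) = 2"
    using R unfolding reg2_def by auto
  have vaR: "(v, a) \<in> R" and vbR: "(v, b) \<in> R" using nbv unfolding nb_def by auto
  have aW: "a \<in> W" and bW: "b \<in> W" using vaR vbR sub by auto
  have av: "a \<noteq> v" and bv: "b \<noteq> v" using vaR vbR irr by auto
  have tov: "x = a \<or> x = b" if "(x, v) \<in> R" for x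
    using sym[OF that] nbv unfolding nb_def by auto
  define W0 where "W0 = W - {v}"
  define R0 where "R0 = (R - {(v, a), (a, v), (v, b), (b, v)}) \<union> {(a, b), (b, a)}"
  have aW0: "a \<in> W0" and bW0: "b \<in> W0" unfolding W0_def using aW bW av bv by auto
  have R0D: "(x, y) \<in> R0 \<Longrightarrow> (x, y) \<in> R \<or> (x = a \<and> y = b) \<or> (x = b \<and> y = a)" for x y
    unfolding R0_def by auto
  have nbR0: "nb R0 x = (nb R x - {v}) \<union> (if x = a then {b} else if x = b then {a} else {})"
    if x: "x \<in> W0" for x
  proof -
    have xv: "x \<noteq> v" using x unfolding W0_def by blast
    show ?thesis unfolding nb_def R0_def using xv ab tov by auto
  qed
  have card_ab: "card (nb R0 x) = 2" if x: "x = a \<or> x = b" for x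
  proof -
    define y where "y = (if x = a then b else a)"
    have xW0: "x \<in> W0" using x aW0 bW0 by blast
    have e: "nb R0 x = insert y (nb R x - {v})" unfolding y_def using nbR0[OF xW0] ab x by auto
    have vin: "v \<in> nb R x" using x sym[OF vaR] sym[OF vbR] unfolding nb_def by auto
    have xW: "x \<in> W" using x aW bW by blast
    have finx: "finite (nb R x)" using nb_sub[OF R] fin finite_subset by blast
    have "card (nb R x - {v}) = 1" using deg[OF xW] vin finx by simp
    moreover have "y \<notin> nb R x - {v}" using abR sym x unfolding y_def nb_def by auto
    ultimately show ?thesis using e finx by simp
  qed
  have reg0: "reg2 W0 R0"
    unfolding reg2_def
  proof (intro conjI allI impI ballI)
    show "finite W0" unfolding W0_def using fin by simp
    show "R0 \<subseteq> W0 \<times> W0"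
    proof
      fix p assume p: "p \<in> R0"
      obtain x y where pxy: "p = (x, y)" by (cases p)
      show "p \<in> W0 \<times> W0"
      proof (cases "(x, y) \<in> {(a, b), (b, a)}")
        case True then show ?thesis using pxy aW0 bW0 by auto
      next
        case False
        then have xyR: "(x, y) \<in> R" "(x, y) \<notin> {(v, a), (a, v), (v, b), (b, v)}" using p pxy unfolding R0_def by auto
        have "x \<in> W" "y \<in> W" using xyR(1) sub by auto
        moreover have "x \<noteq> v" using xyR nbv unfolding nb_def by auto
        moreover have "y \<noteq> v" using xyR tov by auto
        ultimately show ?thesis using pxy unfolding W0_def by auto
      qed
    qed
    fix x y assume "(x, y) \<in> R0" then show "(y, x) \<in> R0" unfolding R0_def using sym by auto
  next
    fix x show "(x, x) \<notin> R0" unfolding R0_def using irr ab by auto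
  next
    fix u assume u: "u \<in> W0"
    show "card (nb R0 u) = 2"
    proof (cases "u = a \<or> u = b")
      case True then show ?thesis using card_ab by blast
    next
      case False
      have "v \<notin> nb R u" using tov False unfolding nb_def by auto
      then have "nb R0 u = nb R u" using nbR0[OF u] False by auto
      then show ?thesis using deg u unfolding W0_def by auto
    qed
  qed
  have lt: "card W0 < card W" unfolding W0_def using fin v by (intro psubset_card_mono) auto
  obtain s0 where s0: "orient W0 R0 s0" using IH[OF lt reg0] by blast
  have s0W: "\<And>u. u \<in> W0 \<Longrightarrow> s0 u \<in> W0 \<and> (u, s0 u) \<in> R0 \<and> s0 (s0 u) \<noteq> u"
    using s0 unfolding orient_def by blast
  have s0inj: "inj_on s0 W0" using s0 unfolding orient_def by blast
  have fin0: "finite W0" unfolding W0_def using fin by simp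
  have s0sub: "s0 ` W0 \<subseteq> W0" using s0W by blast
  have s0surj: "s0 ` W0 = W0" using endo_inj_surj[OF fin0 s0sub s0inj] .
  have s0sym: "\<And>x y. (x, y) \<in> R0 \<Longrightarrow> (y, x) \<in> R0" using reg0 unfolding reg2_def by blast
  have "s0 a = b \<or> s0 b = a"
  proof -
    have "a \<in> s0 ` W0" using s0surj aW0 by simp
    then obtain p where p: "p \<in> W0" "s0 p = a" by blast
    have "p \<in> nb R0 a" using s0W[OF p(1)] p(2) s0sym unfolding nb_def by auto
    moreover have "s0 a \<in> nb R0 a" using s0W[OF aW0] unfolding nb_def by auto
    moreover have "p \<noteq> s0 a" using s0W[OF aW0] p(2) by auto
    ultimately have "nb R0 a = {p, s0 a}" using card2_eq[OF card_ab[of a]] by blast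
    moreover have "b \<in> nb R0 a" unfolding nb_def R0_def by auto
    ultimately show ?thesis using p(2) by auto
  qed
  moreover have main: "\<exists>s. orient W R s"
    if ab': "s0 a' = b'" "a' \<noteq> b'" "(v, a') \<in> R" "(v, b') \<in> R" "a' \<in> W0" "b' \<in> W0"
    and R0D': "\<And>x y. (x, y) \<in> R0 \<Longrightarrow> (x, y) \<in> R \<or> (x = a' \<and> y = b') \<or> (x = b' \<and> y = a')"
    for a' b'
  proof -
  define s where "s x = (if x = v then b' else if x = a' then v else s0 x)" for x
  have W0d: "\<And>u. u \<in> W0 \<Longrightarrow> u \<noteq> v \<and> u \<in> W" unfolding W0_def by blast
  have Wcases: "\<And>u. u \<in> W \<Longrightarrow> u = v \<or> u = a' \<or> (u \<in> W0 \<and> u \<noteq> a')" unfolding W0_def by blast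
  have av': "a' \<noteq> v" "b' \<noteq> v" using W0d ab'(5,6) by auto
  have sv: "s v = b'" "s a' = v" unfolding s_def using av' by auto
  have so: "\<And>u. u \<in> W0 \<Longrightarrow> u \<noteq> a' \<Longrightarrow> s u = s0 u" unfolding s_def using W0d by auto
  have part1: "s u \<in> W \<and> (u, s u) \<in> R \<and> s (s u) \<noteq> u" if u: "u \<in> W" for u
  proof -
    consider "u = v" | "u = a'" | "u \<in> W0" "u \<noteq> a'" using Wcases[OF u] by blast
    then show ?thesis
    proof cases
      case 1
      have "s b' = s0 b'" using so[OF ab'(6)] ab'(2) by simp
      moreover have "s0 b' \<noteq> v" using s0W[OF ab'(6)] W0d by blast
      ultimately show ?thesis using 1 sv ab'(4,6) W0d av' by auto
    next
      case 2
      show ?thesis using 2 sv v sym[OF ab'(3)] ab'(2) by auto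
    next
      case 3
      have su: "s u = s0 u" using so[OF 3] .
      have "(u, s0 u) \<in> R"
      proof -
        have "(u, s0 u) \<in> R0" using s0W[OF 3(1)] by blast
        then have "(u, s0 u) \<in> R \<or> (u = b' \<and> s0 u = a')" using R0D' 3(2) by blast
        moreover have "\<not> (u = b' \<and> s0 u = a')" using s0W[OF ab'(5)] ab'(1) by auto
        ultimately show ?thesis by blast
      qed
      moreover have "s (s u) \<noteq> u"
      proof (cases "s0 u = a'")
        case True then show ?thesis using su sv W0d[OF 3(1)] by auto
      next
        case False
        have "s (s0 u) = s0 (s0 u)" using so[OF conjunct1[OF s0W[OF 3(1)]] False] .
        then show ?thesis using su s0W[OF 3(1)] by simp
      qed
      ultimately show ?thesis using su s0W[OF 3(1)] W0d by auto
    qed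
  qed
  have "inj_on s W"
  proof (rule inj_onI)
    fix x y assume xy: "x \<in> W" "y \<in> W" "s x = s y"
    have oth: "s z = s0 z \<and> s0 z \<in> W0 \<and> s0 z \<noteq> b'" if z: "z \<in> W0" "z \<noteq> a'" for z
    proof -
      have "s0 z \<noteq> s0 a'" using inj_onD[OF s0inj _ z(1) ab'(5)] z(2) by blast
      then show ?thesis using so[OF z] s0W[OF z(1)] ab'(1) by simp
    qed
    consider "x = v" | "x = a'" | "x \<in> W0" "x \<noteq> a'" using Wcases[OF xy(1)] by blast
    then show "x = y"
    proof cases
      case 1
      consider "y = v" | "y = a'" | "y \<in> W0" "y \<noteq> a'" using Wcases[OF xy(2)] by blast
      then show ?thesis
      proof cases
        case 1 then show ?thesis using \<open>x = v\<close> by simp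
      next
        case 2 then show ?thesis using \<open>x = v\<close> xy(3) sv av' by simp
      next
        case 3 then show ?thesis using \<open>x = v\<close> xy(3) sv oth[OF 3] by simp
      qed
    next
      case 2
      consider "y = v" | "y = a'" | "y \<in> W0" "y \<noteq> a'" using Wcases[OF xy(2)] by blast
      then show ?thesis
      proof cases
        case 1 then show ?thesis using \<open>x = a'\<close> xy(3) sv av' by simp
      next
        case 2 then show ?thesis using \<open>x = a'\<close> by simp
      next
        case 3 then show ?thesis using \<open>x = a'\<close> xy(3) sv oth[OF 3] W0d by fastforce
      qed
    next
      case 3
      consider "y = v" | "y = a'" | "y \<in> W0" "y \<noteq> a'" using Wcases[OF xy(2)] by blast
      then show ?thesis
      proof cases
        case 1 then show ?thesis using xy(3) sv oth[OF 3] by simp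
      next
        case 2 then show ?thesis using xy(3) sv oth[OF 3] W0d by fastforce
      next
        case 4: 3
        then show ?thesis using xy(3) oth[OF 3] oth[OF 4] inj_onD[OF s0inj] 3(1) 4(1) by metis
      qed
    qed
  qed
  then show ?thesis using part1 unfolding orient_def by blast
qed
  ultimately show ?thesis
  proof (elim disjE)
    assume h: "s0 a = b"
    show ?thesis by (rule main[OF h ab vaR vbR aW0 bW0 R0D])
  next
    assume h: "s0 b = a"
    have R0D2: "\<And>x y. (x, y) \<in> R0 \<Longrightarrow> (x, y) \<in> R \<or> (x = b \<and> y = a) \<or> (x = a \<and> y = b)"
      using R0D by blast
    have ba: "b \<noteq> a" using ab by simp
    show ?thesis by (rule main[OF h ba vbR vaR bW0 aW0 R0D2])
  qed
qed

lemma orient_exists: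
  fixes W :: "'a set" and R :: "('a \<times> 'a) set"
  shows "reg2 W R \<Longrightarrow> \<exists>s. orient W R s"
proof (induction "card W" arbitrary: W R rule: less_induct)
  case less
  show ?case
  proof (cases "W = {}")
    case True then show ?thesis unfolding orient_def by auto
  next
    case False
    then obtain v where v: "v \<in> W" by blast
    have "card (nb R v) = 2" using less.prems v unfolding reg2_def by blast
    then obtain a b where ab: "a \<noteq> b" "nb R v = {a, b}" by (rule card2_obtain)
    show ?thesis
    proof (cases "(a, b) \<in> R")
      case True
      show ?thesis by (rule orient_step_tri[OF less.prems v ab(2) ab(1) True less.hyps])
    next
      case False
      show ?thesis by (rule orient_step_path[OF less.prems v ab(2) ab(1) False less.hyps])
    qed
  qed
qed

lemma orient_surj:
  assumes "reg2 W R" "orient W R s"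
  shows "s ` W = W"
proof -
  have fin: "finite W" using assms(1) unfolding reg2_def by blast
  have sub: "s ` W \<subseteq> W" using assms(2) unfolding orient_def by blast
  have inj: "inj_on s W" using assms(2) unfolding orient_def by blast
  show ?thesis using endo_inj_surj[OF fin sub inj] .
qed

lemma orient_nbr:
  assumes R: "reg2 W R" and s: "orient W R s" and u: "u \<in> W" and uw: "(u, w) \<in> R"
  shows "w = s u \<or> s w = u"
proof -
  have "u \<in> s ` W" using orient_surj[OF R s] u by simp
  then obtain p where p: "p \<in> W" "s p = u" by blast
  have sW: "\<And>x. x \<in> W \<Longrightarrow> s x \<in> W \<and> (x, s x) \<in> R \<and> s (s x) \<noteq> x" using s unfolding orient_def by blast
  have sym: "\<And>x y. (x, y) \<in> R \<Longrightarrow> (y, x) \<in> R" using R unfolding reg2_def by blast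
  have deg: "card (nb R u) = 2" using R u unfolding reg2_def by blast
  have "p \<in> nb R u" using sW[OF p(1)] p(2) sym unfolding nb_def by auto
  moreover have "s u \<in> nb R u" using sW[OF u] unfolding nb_def by auto
  moreover have "p \<noteq> s u" using sW[OF u] p(2) by auto
  ultimately have "nb R u = {p, s u}" using card2_eq[OF deg] by blast
  moreover have "w \<in> nb R u" using uw unfolding nb_def by simp
  ultimately show ?thesis using p(2) by auto
qed

lemma orient_pair_inj:
  assumes s: "orient W R s" and uw: "u \<in> W" "w \<in> W" and eq: "{u, s u} = {w, s w}"
  shows "u = w"
proof (rule ccontr)
  assume ne: "u \<noteq> w"
  have sW: "\<And>x. x \<in> W \<Longrightarrow> s x \<in> W \<and> (x, s x) \<in> R \<and> s (s x) \<noteq> x" using s unfolding orient_def by blast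
  have "u = s w" "w = s u" using eq ne by (auto simp: doubleton_eq_iff)
  then show False using sW[OF uw(1)] by simp
qed

lemma orient_share:
  assumes R: "reg2 W R" and s: "orient W R s" and uw: "u \<in> W" "w \<in> W" "u \<noteq> w"
  shows "(u, w) \<in> R \<longleftrightarrow> {u, s u} \<inter> {w, s w} \<noteq> {}"
proof
  assume "(u, w) \<in> R"
  then have "w = s u \<or> s w = u" using orient_nbr[OF R s uw(1)] by blast
  then show "{u, s u} \<inter> {w, s w} \<noteq> {}" by auto
next
  assume sh: "{u, s u} \<inter> {w, s w} \<noteq> {}"
  have sW: "\<And>x. x \<in> W \<Longrightarrow> s x \<in> W \<and> (x, s x) \<in> R \<and> s (s x) \<noteq> x" using s unfolding orient_def by blast
  have inj: "inj_on s W" using s unfolding orient_def by blast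
  have sym: "\<And>x y. (x, y) \<in> R \<Longrightarrow> (y, x) \<in> R" using R unfolding reg2_def by blast
  have "u = s w \<or> s u = w \<or> s u = s w" using sh uw(3) by auto
  moreover have "s u \<noteq> s w" using inj_onD[OF inj _ uw(1,2)] uw(3) by blast
  ultimately have "u = s w \<or> s u = w" by blast
  then show "(u, w) \<in> R" using sW[OF uw(1)] sW[OF uw(2)] sym by auto
qed




definition adj :: "'a set \<Rightarrow> 'a set \<Rightarrow> bool" where
  "adj I J \<longleftrightarrow> (\<exists>x. (I - J) \<union> (J - I) = {x})"

lemma adj_iff:
  "adj I J \<longleftrightarrow> (\<exists>x. x \<notin> I \<and> J = insert x I) \<or> (\<exists>x. x \<notin> J \<and> I = insert x J)"
proof
  assume "adj I J"
  then obtain x where x: "(I - J) \<union> (J - I) = {x}" unfolding adj_def by blast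
  have xe: "\<And>y. (y \<in> I \<and> y \<notin> J) \<or> (y \<in> J \<and> y \<notin> I) \<longleftrightarrow> y = x"
    using x by (auto simp: set_eq_iff)
  show "(\<exists>x. x \<notin> I \<and> J = insert x I) \<or> (\<exists>x. x \<notin> J \<and> I = insert x J)"
  proof (cases "x \<in> I")
    case True
    then have "x \<notin> J" using xe by blast
    have "I = insert x J"
    proof (rule set_eqI)
      fix y show "y \<in> I \<longleftrightarrow> y \<in> insert x J" using xe[of y] True by blast
    qed
    then show ?thesis using \<open>x \<notin> J\<close> by blast
  next
    case False
    then have "x \<in> J" using xe by blast
    have "J = insert x I"
    proof (rule set_eqI)
      fix y show "y \<in> J \<longleftrightarrow> y \<in> insert x I" using xe[of y] False by blast
    qed
    then show ?thesis using False by blast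
  qed
next
  assume "(\<exists>x. x \<notin> I \<and> J = insert x I) \<or> (\<exists>x. x \<notin> J \<and> I = insert x J)"
  then show "adj I J" unfolding adj_def by blast
qed

lemma adj_sym: "adj I J \<Longrightarrow> adj J I"
  unfolding adj_iff by blast

lemma adj_neq: "adj I J \<Longrightarrow> I \<noteq> J"
  unfolding adj_iff by blast

lemma adj_insert: "x \<notin> I \<Longrightarrow> adj I (insert x I)"
  unfolding adj_iff by blast

lemma adj_finite:
  assumes "adj I J" "finite I"
  shows "finite J"
  using assms(1) unfolding adj_iff
proof
  assume "\<exists>x. x \<notin> I \<and> J = insert x I"
  then show ?thesis using assms(2) by auto
next
  assume "\<exists>x. x \<notin> J \<and> I = insert x J"
  then have "J \<subseteq> I" by blast
  then show ?thesis using assms(2) finite_subset by blast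
qed

lemma adj_card:
  assumes "adj I J" "finite I" "finite J"
  shows "card J = Suc (card I) \<or> card I = Suc (card J)"
  using assms(1) unfolding adj_iff
proof
  assume "\<exists>x. x \<notin> I \<and> J = insert x I"
  then obtain x where "x \<notin> I" "J = insert x I" by blast
  then show ?thesis using assms(2) by simp
next
  assume "\<exists>x. x \<notin> J \<and> I = insert x J"
  then obtain x where "x \<notin> J" "I = insert x J" by blast
  then show ?thesis using assms(3) by simp
qed

lemma adj_up:
  assumes "adj I J" "finite J" "card I < card J"
  shows "\<exists>x. x \<notin> I \<and> J = insert x I"
  using assms(1) unfolding adj_iff
proof
  assume "\<exists>x. x \<notin> J \<and> I = insert x J"
  then obtain x where "x \<notin> J" "I = insert x J" by blast
  then have "card I = Suc (card J)" using assms(2) by simp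
  then show ?thesis using assms(3) by simp
qed

lemma adj_up_subset:
  assumes "adj I J" "finite J" "card I < card J"
  shows "I \<subseteq> J"
  using adj_up[OF assms] by blast

lemma adj_single_nbr:
  assumes "adj {v} M" "M \<noteq> {}"
  shows "\<exists>y. y \<noteq> v \<and> M = {v, y}"
  using assms(1) unfolding adj_iff
proof
  assume "\<exists>x. x \<notin> {v} \<and> M = insert x {v}"
  then obtain x where "x \<notin> {v}" "M = insert x {v}" by blast
  then show ?thesis by (intro exI[of _ x]) auto
next
  assume "\<exists>x. x \<notin> M \<and> {v} = insert x M"
  then obtain x where x: "x \<notin> M" "{v} = insert x M" by blast
  then have "M \<subseteq> {v}" "x = v" by auto
  then have "M = {}" using x(1) by blast
  then show ?thesis using assms(2) by blast
qed

lemma adj_single_single: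
  assumes "adj {u} M" "adj {v} M" "M \<noteq> {}" "u \<noteq> v"
  shows "M = {u, v}"
proof -
  obtain y where y: "y \<noteq> u" "M = {u, y}" using adj_single_nbr[OF assms(1,3)] by blast
  obtain z where z: "z \<noteq> v" "M = {v, z}" using adj_single_nbr[OF assms(2,3)] by blast
  have "v \<in> M" using z by blast
  then have "y = v" using y assms(4) by blast
  then show ?thesis using y by simp
qed

lemma adj_pair_pair:
  assumes "adj {v, a} M" "adj {v, b} M" "M \<noteq> {v}" "a \<noteq> b" "a \<noteq> v" "b \<noteq> v"
  shows "M = {v, a, b}"
proof -
  have fin: "finite M" using adj_finite[OF assms(1)] by simp
  have c1: "card M = 3 \<or> card M = 1"
    using adj_card[OF assms(1) _ fin] assms(5) by auto
  show ?thesis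
  proof (cases "card M = 3")
    case True
    then have "{v, a} \<subseteq> M" using adj_up_subset[OF assms(1) fin] assms(5) by simp
    moreover have "{v, b} \<subseteq> M" using adj_up_subset[OF assms(2) fin] True assms(6) by simp
    ultimately have sub: "{v, a, b} \<subseteq> M" by blast
    have "card {v, a, b} = 3" using assms(4-6) by simp
    then show ?thesis using card_subset_eq[OF fin sub] True by simp
  next
    case False
    then have "card M = 1" using c1 by simp
    have "M \<subseteq> {v, a}" using adj_up_subset[OF adj_sym[OF assms(1)]] \<open>card M = 1\<close> assms(5) by simp
    moreover have "M \<subseteq> {v, b}" using adj_up_subset[OF adj_sym[OF assms(2)]] \<open>card M = 1\<close> assms(6) by simp
    ultimately have "M \<subseteq> {v}" using assms(4) by blast
    then have "M = {v}" using \<open>card M = 1\<close> card_subset_eq[of "{v}" M] by simp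
    then show ?thesis using assms(3) by blast
  qed
qed

definition PP :: "'a set \<Rightarrow> ('a \<times> 'a) set \<Rightarrow> 'a set set" where
  "PP V E = {I. indep V E I \<and> I \<noteq> {}}"

lemma fgraphD:
  assumes "fgraph V E"
  shows "finite V" "E \<subseteq> V \<times> V" "\<And>x y. (x, y) \<in> E \<Longrightarrow> (y, x) \<in> E" "\<And>x. (x, x) \<notin> E"
  using assms unfolding fgraph_def sym_def by auto

lemma PP_D: "I \<in> PP V E \<Longrightarrow> I \<subseteq> V \<and> I \<noteq> {} \<and> (\<forall>x\<in>I. \<forall>y\<in>I. (x, y) \<notin> E)"
  unfolding PP_def indep_def by auto

lemma PP_fin: "fgraph V E \<Longrightarrow> I \<in> PP V E \<Longrightarrow> finite I"
proof -
  assume "fgraph V E" "I \<in> PP V E"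
  then have "I \<subseteq> V" "finite V" using PP_D[of I V E] fgraphD(1)[of V E] by auto
  then show ?thesis by (rule finite_subset)
qed

lemma PP_sub: "I \<in> PP V E \<Longrightarrow> J \<subseteq> I \<Longrightarrow> J \<noteq> {} \<Longrightarrow> J \<in> PP V E"
  unfolding PP_def indep_def by blast

lemma PP_single:
  assumes "fgraph V E" "v \<in> V"
  shows "{v} \<in> PP V E"
proof -
  have "(v, v) \<notin> E" using fgraphD(4)[OF assms(1)] by blast
  then show ?thesis using assms(2) unfolding PP_def indep_def by auto
qed

lemma PP_pair:
  assumes "fgraph V E" "u \<in> V" "v \<in> V" "(u, v) \<notin> E"
  shows "{u, v} \<in> PP V E"
proof -
  have "(v, u) \<notin> E" using fgraphD(3)[OF assms(1)] assms(4) by blast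
  moreover have "(u, u) \<notin> E" "(v, v) \<notin> E" using fgraphD(4)[OF assms(1)] by auto
  ultimately show ?thesis using assms(2-4) unfolding PP_def indep_def by auto
qed

lemma PP_pairD: "{u, v} \<in> PP V E \<Longrightarrow> u \<in> V \<and> v \<in> V \<and> (u, v) \<notin> E"
  unfolding PP_def indep_def by blast

lemma rverts_TAR1: "fgraph V E \<Longrightarrow> rverts TAR V E (Suc 0) = PP V E"
proof (rule set_eqI)
  assume G: "fgraph V E"
  fix I
  have "indep V E I \<Longrightarrow> finite I"
    using G unfolding indep_def fgraph_def using finite_subset by blast
  then have "indep V E I \<Longrightarrow> (Suc 0 \<le> card I \<longleftrightarrow> I \<noteq> {})"
    by (simp add: Suc_le_eq card_gt_0_iff)
  then show "I \<in> rverts TAR V E (Suc 0) \<longleftrightarrow> I \<in> PP V E"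
    unfolding PP_def by auto
qed

lemma redges_TAR: "redges TAR V E k = {(I, J). I \<in> rverts TAR V E k \<and> J \<in> rverts TAR V E k \<and> adj I J}"
  unfolding adj_def by simp

lemma edge_common_nbr:
  assumes G: "fgraph V E" and uv: "u \<in> V" "v \<in> V" "u \<noteq> v"
  shows "(u, v) \<notin> E \<longleftrightarrow> (\<exists>M\<in>PP V E. adj {u} M \<and> adj {v} M)"
proof
  assume "(u, v) \<notin> E"
  then have "{u, v} \<in> PP V E" using PP_pair[OF G uv(1,2)] by blast
  moreover have "adj {u} {u, v}" using adj_insert[of v "{u}"] uv(3) by (simp add: insert_commute)
  moreover have "adj {v} {u, v}" using adj_insert[of u "{v}"] uv(3) by simp
  ultimately show "\<exists>M\<in>PP V E. adj {u} M \<and> adj {v} M" by blast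
next
  assume "\<exists>M\<in>PP V E. adj {u} M \<and> adj {v} M"
  then obtain M where M: "M \<in> PP V E" "adj {u} M" "adj {v} M" by blast
  have "M \<noteq> {}" using PP_D[OF M(1)] by blast
  then have "M = {u, v}" using adj_single_single[OF M(2,3)] uv(3) by blast
  then show "(u, v) \<notin> E" using M(1) PP_pairD[of u v V E] by simp
qed

lemma down_second_common:
  assumes G: "fgraph V E" and B: "B \<in> PP V E" "card B \<ge> 3"
    and Y: "Y1 \<noteq> Y2" "adj Y1 B" "adj Y2 B" "card Y1 < card B" "card Y2 < card B"
  shows "\<exists>M\<in>PP V E. M \<noteq> B \<and> adj Y1 M \<and> adj Y2 M"
proof -
  have fB: "finite B" using PP_fin[OF G B(1)] .
  obtain a where a: "a \<notin> Y1" "B = insert a Y1" using adj_up[OF Y(2) fB Y(4)] by blast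
  obtain b where b: "b \<notin> Y2" "B = insert b Y2" using adj_up[OF Y(3) fB Y(5)] by blast
  have Y1a: "Y1 = B - {a}" using a by blast
  have Y2b: "Y2 = B - {b}" using b by blast
  have ab: "a \<noteq> b" using Y1a Y2b Y(1) by blast
  have aB: "a \<in> B" and bB: "b \<in> B" using a b by auto
  define M where "M = B - {a, b}"
  have Y1M: "Y1 = insert b M" unfolding M_def Y1a using bB ab by blast
  have Y2M: "Y2 = insert a M" unfolding M_def Y2b using aB ab by blast
  have bM: "b \<notin> M" "a \<notin> M" unfolding M_def by auto
  have sub: "{a, b} \<subseteq> B" using aB bB by blast
  have "card M = card B - card {a, b}" unfolding M_def
    using card_Diff_subset[OF _ sub] fB finite_subset[OF sub fB] by simp
  also have "card {a, b} = 2" using ab by simp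
  finally have "card M = card B - 2" .
  then have "M \<noteq> {}" using B(2) by auto
  moreover have "M \<subseteq> B" unfolding M_def by blast
  ultimately have "M \<in> PP V E" using PP_sub[OF B(1)] by blast
  moreover have "adj Y1 M" using adj_sym[OF adj_insert[OF bM(1)]] Y1M by simp
  moreover have "adj Y2 M" using adj_sym[OF adj_insert[OF bM(2)]] Y2M by simp
  moreover have "M \<noteq> B" using aB bM by blast
  ultimately show ?thesis by blast
qed

lemma mixed_second_common:
  assumes G: "fgraph V E" and B: "B \<in> PP V E"
    and adjs: "adj A M" "adj B M" "card A < card M" "card M < card B"
  shows "\<exists>M2\<in>PP V E. M2 \<noteq> M \<and> adj A M2 \<and> adj B M2"
proof -
  have fB: "finite B" using PP_fin[OF G B] .
  obtain b where b: "b \<notin> M" "B = insert b M" using adj_up[OF adj_sym[OF adjs(2)] fB adjs(4)] by blast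
  have fM: "finite M" using fB b by simp
  obtain a where a: "a \<notin> A" "M = insert a A" using adj_up[OF adjs(1) fM adjs(3)] by blast
  define M2 where "M2 = insert b A"
  have "b \<notin> A" using a b by blast
  then have "adj A M2" unfolding M2_def by (rule adj_insert)
  moreover have "a \<notin> M2" using a b unfolding M2_def by blast
  then have "adj M2 B" using adj_insert[of a M2] a b unfolding M2_def by (simp add: insert_commute)
  moreover have "M2 \<in> PP V E" using PP_sub[OF B] a b unfolding M2_def by blast
  moreover have "M2 \<noteq> M" using b unfolding M2_def by blast
  ultimately show ?thesis using adj_sym by blast
qed

lemma up_unique_common:
  assumes fin: "finite M1" "finite M2" and PQ: "P \<noteq> Q" "card P = card Q"
    and adjs: "adj P M1" "adj Q M1" "adj P M2" "adj Q M2"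
    and c: "card M1 = Suc (card P)" "card M2 = Suc (card P)"
  shows "M1 = M2"
proof -
  have key: "P \<union> Q = M" if "finite M" "adj P M" "adj Q M" "card M = Suc (card P)" for M
  proof -
    have "P \<subseteq> M" using adj_up_subset[OF that(2,1)] that(4) by simp
    moreover have "Q \<subseteq> M" using adj_up_subset[OF that(3,1)] that(4) PQ(2) by simp
    ultimately have sub: "P \<union> Q \<subseteq> M" by blast
    have fP: "finite P" "finite Q" using \<open>P \<subseteq> M\<close> \<open>Q \<subseteq> M\<close> that(1) finite_subset by auto
    have "\<not> Q \<subseteq> P"
    proof
      assume "Q \<subseteq> P"
      then have "Q = P" using card_subset_eq[OF fP(1), of Q] PQ(2) by simp
      then show False using PQ(1) by simp
    qed
    then have "P \<subset> P \<union> Q" by blast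
    then have "card P < card (P \<union> Q)" using fP by (simp add: psubset_card_mono)
    then have "card M \<le> card (P \<union> Q)" using that(4) by simp
    then show ?thesis using card_seteq[OF that(1) sub] by simp
  qed
  show ?thesis using key[OF fin(1) adjs(1,2) c(1)] key[OF fin(2) adjs(3,4) c(2)] by simp
qed

lemma ne_of_card: "0 < card X \<Longrightarrow> X \<noteq> {}"
  by auto

locale iso1 =
  fixes V :: "'a set" and E :: "('a \<times> 'a) set" and V' :: "'b set" and E' :: "('b \<times> 'b) set"
    and f :: "'a set \<Rightarrow> 'b set"
  assumes G: "fgraph V E" and G': "fgraph V' E'"
    and bij: "bij_betw f (PP V E) (PP V' E')"
    and fadj: "\<And>I J. I \<in> PP V E \<Longrightarrow> J \<in> PP V E \<Longrightarrow> adj (f I) (f J) \<longleftrightarrow> adj I J"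
begin

lemma fP: "I \<in> PP V E \<Longrightarrow> f I \<in> PP V' E'"
  by (rule bij_betw_apply[OF bij])

lemma finj: "I \<in> PP V E \<Longrightarrow> J \<in> PP V E \<Longrightarrow> f I = f J \<Longrightarrow> I = J"
  using inj_onD[OF bij_betw_imp_inj_on[OF bij]] by blast

lemma fsurj: "J \<in> PP V' E' \<Longrightarrow> \<exists>I\<in>PP V E. f I = J"
proof -
  assume "J \<in> PP V' E'"
  then have "J \<in> f ` PP V E" using bij_betw_imp_surj_on[OF bij] by simp
  then show ?thesis by (auto elim: imageE)
qed

lemma ffin: "I \<in> PP V E \<Longrightarrow> finite (f I)"
  using PP_fin[OF G' fP] .

lemma fne: "I \<in> PP V E \<Longrightarrow> f I \<noteq> {}"
  using PP_D[OF fP] by blast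

lemma fcard_pos: "I \<in> PP V E \<Longrightarrow> card (f I) \<ge> 1"
  using ffin fne by (simp add: Suc_le_eq card_gt_0_iff)

lemma inv_iso: "iso1 V' E' V E (inv_into (PP V E) f)"
proof
  show "fgraph V' E'" by (rule G')
  show "fgraph V E" by (rule G)
  show "bij_betw (inv_into (PP V E) f) (PP V' E') (PP V E)"
    using bij by (rule bij_betw_inv_into)
  fix I J assume IJ: "I \<in> PP V' E'" "J \<in> PP V' E'"
  have Ii: "I \<in> f ` PP V E" using IJ(1) bij_betw_imp_surj_on[OF bij] by simp
  have I1: "inv_into (PP V E) f I \<in> PP V E" "f (inv_into (PP V E) f I) = I"
    using inv_into_into[OF Ii] f_inv_into_f[OF Ii] by auto
  have Ji: "J \<in> f ` PP V E" using IJ(2) bij_betw_imp_surj_on[OF bij] by simp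
  have J1: "inv_into (PP V E) f J \<in> PP V E" "f (inv_into (PP V E) f J) = J"
    using inv_into_into[OF Ji] f_inv_into_f[OF Ji] by auto
  show "adj (inv_into (PP V E) f I) (inv_into (PP V E) f J) \<longleftrightarrow> adj I J"
    using fadj[OF I1(1) J1(1)] I1(2) J1(2) by simp
qed

lemma common_pull:
  assumes "A \<in> PP V E" "B \<in> PP V E" "M' \<in> PP V' E'" "adj (f A) M'" "adj (f B) M'"
  shows "\<exists>M\<in>PP V E. f M = M' \<and> adj A M \<and> adj B M"
proof -
  obtain M where M: "M \<in> PP V E" "f M = M'" using fsurj[OF assms(3)] by blast
  then show ?thesis using fadj[OF assms(1) M(1)] fadj[OF assms(2) M(1)] assms(4,5) by auto
qed

lemma fact1:
  assumes uv: "u \<noteq> v" "{u, v} \<in> PP V E"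
  shows "card (f {u}) = card (f {v})"
proof (rule ccontr)
  assume ne: "card (f {u}) \<noteq> card (f {v})"
  have uV: "u \<in> V" "v \<in> V" using PP_pairD[OF uv(2)] by auto
  have Pu: "{u} \<in> PP V E" and Pv: "{v} \<in> PP V E" using PP_single[OF G] uV by auto
  have a1: "adj {u} {u, v}" using adj_insert[of v "{u}"] uv(1) by (simp add: insert_commute)
  have a2: "adj {v} {u, v}" using adj_insert[of u "{v}"] uv(1) by simp
  let ?A = "f {u}" and ?B = "f {v}" and ?M = "f {u, v}"
  have aA: "adj ?A ?M" using fadj[OF Pu uv(2)] a1 by simp
  have aB: "adj ?B ?M" using fadj[OF Pv uv(2)] a2 by simp
  have cA: "card ?M = Suc (card ?A) \<or> card ?A = Suc (card ?M)"
    using adj_card[OF aA ffin[OF Pu] ffin[OF uv(2)]] .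
  have cB: "card ?M = Suc (card ?B) \<or> card ?B = Suc (card ?M)"
    using adj_card[OF aB ffin[OF Pv] ffin[OF uv(2)]] .
  have "\<exists>M2\<in>PP V' E'. M2 \<noteq> ?M \<and> adj ?A M2 \<and> adj ?B M2"
  proof (cases "card ?A < card ?M")
    case True
    then have "card ?M < card ?B" using cA cB ne by auto
    then show ?thesis using mixed_second_common[OF G' fP[OF Pv] aA aB True] by blast
  next
    case False
    then have "card ?B < card ?M" "card ?M < card ?A" using cA cB ne by auto
    then show ?thesis using mixed_second_common[OF G' fP[OF Pu] aB aA] by blast
  qed
  then obtain M2 where M2: "M2 \<in> PP V' E'" "M2 \<noteq> ?M" "adj ?A M2" "adj ?B M2" by blast
  obtain M where M: "M \<in> PP V E" "f M = M2" "adj {u} M" "adj {v} M"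
    using common_pull[OF Pu Pv M2(1,3,4)] by blast
  have "M \<noteq> {}" using PP_D[OF M(1)] by blast
  then have "M = {u, v}" using adj_single_single[OF M(3,4)] uv(1) by blast
  then show False using M(2) M2(2) by simp
qed

end

context iso1
begin

lemma core_aux:
  assumes c: "2 \<le> c"
  shows "\<forall>Y. Y \<in> PP V E \<longrightarrow> card Y = n \<longrightarrow> (\<forall>a\<in>Y. card (f {a}) = c) \<longrightarrow> card (f Y) + n = c + 1"
proof (induction n rule: less_induct)
  case (less n)
  show ?case
  proof (intro allI impI)
    fix Y assume Y: "Y \<in> PP V E" "card Y = n" "\<forall>a\<in>Y. card (f {a}) = c"
    have fY: "finite Y" using PP_fin[OF G Y(1)] .
    have "Y \<noteq> {}" using PP_D[OF Y(1)] by blast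
    then have "card Y > 0" using fY by (simp add: card_gt_0_iff)
    then have n1: "n \<ge> 1" using Y(2) by simp
    show "card (f Y) + n = c + 1"
    proof (cases "n = 1")
      case True
      then obtain a where "Y = {a}" using Y(2) card_1_singletonE by blast
      then show ?thesis using Y(3) True by simp
    next
      case False
      then have n2: "n \<ge> 2" using n1 by simp
      obtain a where aY: "a \<in> Y" using \<open>Y \<noteq> {}\<close> by blast
      have cYa0: "card (Y - {a}) = n - 1" using Y(2) aY fY by simp
      have neA: "Y - {a} \<noteq> {}"
      proof
        assume h: "Y - {a} = {}"
        have "card (Y - {a}) = 0" by (subst h) simp
        then have "n - 1 = 0" using cYa0 by simp
        then show False using n2 by simp
      qed
      then obtain b where bY: "b \<in> Y" "b \<noteq> a" by blast
      define Ya where "Ya = Y - {a}"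
      define Yb where "Yb = Y - {b}"
      have cYa: "card Ya = n - 1" unfolding Ya_def using Y(2) aY fY by simp
      have cYb: "card Yb = n - 1" unfolding Yb_def using Y(2) bY fY by simp
      have PYa: "Ya \<in> PP V E" using PP_sub[OF Y(1), of Ya] neA unfolding Ya_def by blast
      have "Yb \<noteq> {}" using aY bY unfolding Yb_def by blast
      then have PYb: "Yb \<in> PP V E" using PP_sub[OF Y(1), of Yb] unfolding Yb_def by blast
      have lt1: "n - 1 < n" using n2 by simp
      have sa: "\<forall>z\<in>Ya. card (f {z}) = c" using Y(3) unfolding Ya_def by blast
      have sb': "\<forall>z\<in>Yb. card (f {z}) = c" using Y(3) unfolding Yb_def by blast
      have IHa: "card (f Ya) + (n - 1) = c + 1"
        using less.IH[OF lt1, rule_format, OF PYa cYa sa[rule_format]] .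
      have IHb: "card (f Yb) + (n - 1) = c + 1"
        using less.IH[OF lt1, rule_format, OF PYb cYb sb'[rule_format]] .
      have YaY: "Y = insert a Ya" "a \<notin> Ya" unfolding Ya_def using aY by auto
      have YbY: "Y = insert b Yb" "b \<notin> Yb" unfolding Yb_def using bY by auto
      have adjaY: "adj Ya Y" using adj_insert[OF YaY(2)] YaY(1) by simp
      have adjbY: "adj Yb Y" using adj_insert[OF YbY(2)] YbY(1) by simp
      have fadjaY: "adj (f Ya) (f Y)" using fadj[OF PYa Y(1)] adjaY by simp
      have fadjbY: "adj (f Yb) (f Y)" using fadj[OF PYb Y(1)] adjbY by simp
      have ab_ne: "Ya \<noteq> Yb" unfolding Ya_def Yb_def using aY bY by blast
      have fab_ne: "f Ya \<noteq> f Yb" using finj[OF PYa PYb] ab_ne by blast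
      have cc: "card (f Y) = Suc (card (f Ya)) \<or> card (f Ya) = Suc (card (f Y))"
        using adj_card[OF fadjaY ffin[OF PYa] ffin[OF Y(1)]] .
      have not_up: "card (f Y) \<noteq> Suc (card (f Ya))"
      proof
        assume up: "card (f Y) = Suc (card (f Ya))"
        have sb: "card (f Yb) = card (f Ya)" using IHa IHb by simp
        show False
        proof (cases "n = 2")
          case True
          have "card (f Ya) = c" using IHa True by simp
          then have c3: "card (f Y) \<ge> 3" using up c by simp
          have lta: "card (f Ya) < card (f Y)" using up by simp
          have ltb: "card (f Yb) < card (f Y)" using up sb by simp
          obtain M' where M': "M' \<in> PP V' E'" "M' \<noteq> f Y" "adj (f Ya) M'" "adj (f Yb) M'"
            using down_second_common[OF G' fP[OF Y(1)] c3 fab_ne fadjaY fadjbY lta ltb] by blast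
          obtain M where M: "M \<in> PP V E" "f M = M'" "adj Ya M" "adj Yb M"
            using common_pull[OF PYa PYb M'(1,3,4)] by blast
          have Ya1: "Ya = {b}"
          proof -
            have "card Ya = 1" using cYa True by simp
            then obtain z where z: "Ya = {z}" using card_1_singletonE by blast
            have "b \<in> Ya" using bY unfolding Ya_def by blast
            then show ?thesis using z by blast
          qed
          have Yb1: "Yb = {a}"
          proof -
            have "card Yb = 1" using cYb True by simp
            then obtain z where z: "Yb = {z}" using card_1_singletonE by blast
            have "a \<in> Yb" using aY bY unfolding Yb_def by blast
            then show ?thesis using z by blast
          qed
          have "M \<noteq> {}" using PP_D[OF M(1)] by blast
          moreover have "adj {b} M" using M(3) Ya1 by simp
          moreover have "adj {a} M" using M(4) Yb1 by simp
          ultimately have "M = {b, a}" using adj_single_single[of b M a] bY(2) by blast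
          moreover have "Y = {b, a}" using YaY(1) Ya1 by (simp add: insert_commute)
          ultimately show False using M(2) M'(2) by simp
        next
          case False
          then have n3: "n \<ge> 3" using n2 by simp
          define Yab where "Yab = Y - {a, b}"
          have sub: "{a, b} \<subseteq> Y" using aY bY by blast
          have "card Yab = card Y - card {a, b}" unfolding Yab_def
            using card_Diff_subset[OF _ sub] finite_subset[OF sub fY] by simp
          then have cYab: "card Yab = n - 2" using Y(2) bY(2) by simp
          have "Yab \<noteq> {}"
          proof
            assume h: "Yab = {}"
            have "card Yab = 0" by (subst h) simp
            then show False using cYab n3 by simp
          qed
          then have PYab: "Yab \<in> PP V E" using PP_sub[OF Y(1), of Yab] unfolding Yab_def by blast
          have lt2: "n - 2 < n" using n3 by simp
          have sab: "\<forall>z\<in>Yab. card (f {z}) = c" using Y(3) unfolding Yab_def by blast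
          have IHab: "card (f Yab) + (n - 2) = c + 1"
            using less.IH[OF lt2, rule_format, OF PYab cYab sab[rule_format]] .
          have e1: "Ya = insert b Yab" "b \<notin> Yab" unfolding Ya_def Yab_def using bY by auto
          have e2: "Yb = insert a Yab" "a \<notin> Yab" unfolding Yb_def Yab_def using aY bY by auto
          have "adj Yab Ya" using adj_insert[OF e1(2)] e1(1) by simp
          then have "adj (f Yab) (f Ya)" using fadj[OF PYab PYa] by simp
          then have f1: "adj (f Ya) (f Yab)" by (rule adj_sym)
          have "adj Yab Yb" using adj_insert[OF e2(2)] e2(1) by simp
          then have "adj (f Yab) (f Yb)" using fadj[OF PYab PYb] by simp
          then have f2: "adj (f Yb) (f Yab)" by (rule adj_sym)
          have c1: "card (f Yab) = Suc (card (f Ya))" using IHab IHa n3 by simp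
          have "f Yab = f Y"
            using up_unique_common[OF ffin[OF PYab] ffin[OF Y(1)] fab_ne sb[symmetric] f1 f2 fadjaY fadjbY c1 up] .
          then have "Yab = Y" using finj[OF PYab Y(1)] by blast
          then show False using aY unfolding Yab_def by blast
        qed
      qed
      then have "card (f Ya) = Suc (card (f Y))" using cc by simp
      then show ?thesis using IHa n2 by simp
    qed
  qed
qed

lemma core:
  assumes "2 \<le> c" "Y \<in> PP V E" "\<forall>a\<in>Y. card (f {a}) = c"
  shows "card (f Y) + card Y = c + 1"
  using core_aux[OF assms(1), of "card Y"] assms(2,3) by blast

end

context iso1
begin

lemma nobig:
  assumes v: "v \<in> V"
  shows "card (f {v}) \<le> 2"
proof (rule ccontr)
  assume "\<not> card (f {v}) \<le> 2"
  then have c3: "card (f {v}) \<ge> 3" by simp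
  define A where "A = f {v}"
  have Pv: "{v} \<in> PP V E" using PP_single[OF G v] .
  have PA: "A \<in> PP V' E'" unfolding A_def using fP[OF Pv] .
  have fA: "finite A" using PP_fin[OF G' PA] .
  have cA: "card A \<ge> 3" using c3 unfolding A_def .
  define N where "N x = inv_into (PP V E) f (A - {x})" for x
  have N: "N x \<in> PP V E \<and> f (N x) = A - {x} \<and> adj (N x) {v}" if x: "x \<in> A" for x
  proof -
    have cc: "card (A - {x}) = card A - 1" using fA x by simp
    have "A - {x} \<noteq> {}" by (rule ne_of_card) (use cc cA in simp)
    then have P1: "A - {x} \<in> PP V' E'" using PP_sub[OF PA, of "A - {x}"] by blast
    then have im: "A - {x} \<in> f ` PP V E" using bij_betw_imp_surj_on[OF bij] by simp
    have NP: "N x \<in> PP V E" unfolding N_def using inv_into_into[OF im] .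
    have fN: "f (N x) = A - {x}" unfolding N_def using f_inv_into_f[OF im] .
    have "A = insert x (A - {x})" "x \<notin> A - {x}" using x by auto
    then have "adj (A - {x}) A" using adj_insert[of x "A - {x}"] by simp
    then have "adj (f (N x)) (f {v})" using fN unfolding A_def by simp
    then have "adj (N x) {v}" using fadj[OF NP Pv] by simp
    then show ?thesis using NP fN by blast
  qed
  define y where "y x = (SOME y. y \<noteq> v \<and> N x = {v, y})" for x
  have Ny: "y x \<noteq> v \<and> N x = {v, y x}" if x: "x \<in> A" for x
  proof -
    have Nx: "N x \<in> PP V E" "adj (N x) {v}" using N[OF x] by auto
    have "N x \<noteq> {}" using PP_D[OF Nx(1)] by blast
    then have "\<exists>y. y \<noteq> v \<and> N x = {v, y}" using adj_single_nbr[OF adj_sym[OF Nx(2)]] by blast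
    then show ?thesis unfolding y_def by (rule someI_ex)
  qed
  have yV: "y x \<in> V \<and> (v, y x) \<notin> E" if x: "x \<in> A" for x
  proof -
    have "{v, y x} \<in> PP V E" using N[OF x] Ny[OF x] by simp
    then show ?thesis using PP_pairD[of v "y x" V E] by simp
  qed
  have yinj: "inj_on y A"
  proof (rule inj_onI)
    fix x z assume xz: "x \<in> A" "z \<in> A" "y x = y z"
    then have "N x = N z" using Ny[OF xz(1)] Ny[OF xz(2)] by simp
    then have "f (N x) = f (N z)" by simp
    then have "A - {x} = A - {z}" using N[OF xz(1)] N[OF xz(2)] by simp
    then show "x = z" using xz(1,2) by blast
  qed
  have yE: "(y x, y z) \<notin> E" if xz: "x \<in> A" "z \<in> A" "x \<noteq> z" for x z
  proof -
    define Axz where "Axz = A - {x, z}"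
    have sub: "{x, z} \<subseteq> A" using xz by blast
    have "card Axz = card A - card {x, z}" unfolding Axz_def
      using card_Diff_subset[OF _ sub] finite_subset[OF sub fA] by simp
    then have cc: "card Axz = card A - 2" using xz(3) by simp
    have "Axz \<noteq> {}" by (rule ne_of_card) (use cc cA in simp)
    then have PAxz: "Axz \<in> PP V' E'" using PP_sub[OF PA, of Axz] unfolding Axz_def by blast
    have e1: "A - {x} = insert z Axz" "z \<notin> Axz" unfolding Axz_def using xz by auto
    have e2: "A - {z} = insert x Axz" "x \<notin> Axz" unfolding Axz_def using xz by auto
    have a1: "adj (f (N x)) Axz" using N[OF xz(1)] adj_sym[OF adj_insert[OF e1(2)]] e1(1) by simp
    have a2: "adj (f (N z)) Axz" using N[OF xz(2)] adj_sym[OF adj_insert[OF e2(2)]] e2(1) by simp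
    obtain M where M: "M \<in> PP V E" "f M = Axz" "adj (N x) M" "adj (N z) M"
      using common_pull[OF conjunct1[OF N[OF xz(1)]] conjunct1[OF N[OF xz(2)]] PAxz a1 a2] by blast
    have "M \<noteq> {v}"
    proof
      assume "M = {v}"
      then have "Axz = A" using M(2) unfolding A_def by simp
      then show False using xz(1) unfolding Axz_def by blast
    qed
    moreover have "y x \<noteq> y z" using inj_onD[OF yinj _ xz(1) xz(2)] xz(3) by blast
    moreover have "adj {v, y x} M" "adj {v, y z} M" using M(3,4) Ny[OF xz(1)] Ny[OF xz(2)] by auto
    ultimately have "M = {v, y x, y z}"
      using adj_pair_pair[of v "y x" M "y z"] Ny[OF xz(1)] Ny[OF xz(2)] by blast
    then show ?thesis using PP_D[OF M(1)] by blast
  qed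
  define Y where "Y = insert v (y ` A)"
  have vnot: "v \<notin> y ` A" using Ny by auto
  have cY: "card Y = Suc (card A)"
    unfolding Y_def using vnot fA card_image[OF yinj] by simp
  have YV: "Y \<subseteq> V" unfolding Y_def using v yV by auto
  have Eirr: "\<And>a. (a, a) \<notin> E" using fgraphD(4)[OF G] .
  have Esym: "\<And>a b. (a, b) \<in> E \<Longrightarrow> (b, a) \<in> E" using fgraphD(3)[OF G] .
  have Yind: "\<forall>a\<in>Y. \<forall>b\<in>Y. (a, b) \<notin> E"
  proof (intro ballI)
    fix a b assume ab: "a \<in> Y" "b \<in> Y"
    show "(a, b) \<notin> E"
    proof (cases "a = v")
      case True
      show ?thesis
      proof (cases "b = v")
        case True then show ?thesis using \<open>a = v\<close> Eirr by simp
      next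
        case False
        then obtain z where "z \<in> A" "b = y z" using ab(2) unfolding Y_def by blast
        then show ?thesis using yV \<open>a = v\<close> by simp
      qed
    next
      case False
      then obtain x where x: "x \<in> A" "a = y x" using ab(1) unfolding Y_def by blast
      show ?thesis
      proof (cases "b = v")
        case True then show ?thesis using yV[OF x(1)] x(2) Esym by blast
      next
        case False
        then obtain z where z: "z \<in> A" "b = y z" using ab(2) unfolding Y_def by blast
        show ?thesis
        proof (cases "x = z")
          case True then show ?thesis using x z Eirr by simp
        next
          case False then show ?thesis using yE[OF x(1) z(1)] x z by simp
        qed
      qed
    qed
  qed
  have PY: "Y \<in> PP V E" unfolding PP_def indep_def using YV Yind unfolding Y_def by blast
  have allc: "\<forall>a\<in>Y. card (f {a}) = card A"
  proof
    fix a assume "a \<in> Y"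
    then consider "a = v" | x where "x \<in> A" "a = y x" unfolding Y_def by blast
    then show "card (f {a}) = card A"
    proof cases
      case 1 then show ?thesis unfolding A_def by simp
    next
      case (2 x)
      have pp: "{v, y x} \<in> PP V E" using N[OF 2(1)] Ny[OF 2(1)] by simp
      have "v \<noteq> y x" using Ny[OF 2(1)] by auto
      then have "card (f {v}) = card (f {y x})" using fact1 pp by blast
      then show ?thesis using 2 unfolding A_def by simp
    qed
  qed
  have "card (f Y) + card Y = card A + 1" using core[OF _ PY allc] cA by simp
  then have "card (f Y) = 0" using cY by simp
  then show False using fcard_pos[OF PY] by simp
qed

end

lemma pairs_common:
  assumes G: "fgraph V E" and P: "P \<in> PP V E" "card P = 2" and Q: "Q \<in> PP V E" "card Q = 2" and PQ: "P \<noteq> Q"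
  shows "(\<exists>M\<in>PP V E. adj P M \<and> adj Q M) \<longleftrightarrow> P \<inter> Q \<noteq> {}"
proof
  assume "\<exists>M\<in>PP V E. adj P M \<and> adj Q M"
  then obtain M where M: "M \<in> PP V E" "adj P M" "adj Q M" by blast
  have fM: "finite M" using PP_fin[OF G M(1)] .
  have fP: "finite P" "finite Q" using PP_fin[OF G P(1)] PP_fin[OF G Q(1)] by auto
  have cM: "card M = 3 \<or> card M = 1" using adj_card[OF M(2) fP(1) fM] P(2) by auto
  show "P \<inter> Q \<noteq> {}"
  proof (cases "card M = 1")
    case True
    have "M \<subseteq> P" using adj_up_subset[OF adj_sym[OF M(2)] fP(1)] True P(2) by simp
    moreover have "M \<subseteq> Q" using adj_up_subset[OF adj_sym[OF M(3)] fP(2)] True Q(2) by simp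
    moreover have "M \<noteq> {}" using PP_D[OF M(1)] by blast
    ultimately show ?thesis by blast
  next
    case False
    then have c3: "card M = 3" using cM by simp
    have "P \<subseteq> M" using adj_up_subset[OF M(2) fM] c3 P(2) by simp
    moreover have "Q \<subseteq> M" using adj_up_subset[OF M(3) fM] c3 Q(2) by simp
    ultimately have sub: "P \<union> Q \<subseteq> M" by blast
    show ?thesis
    proof
      assume "P \<inter> Q = {}"
      then have "card (P \<union> Q) = 4" using card_Un_disjoint[OF fP] P(2) Q(2) by simp
      moreover have "card (P \<union> Q) \<le> card M" using card_mono[OF fM sub] .
      ultimately show False using c3 by simp
    qed
  qed
next
  assume "P \<inter> Q \<noteq> {}"
  then obtain z where z: "z \<in> P" "z \<in> Q" by blast
  have Pz: "{z} \<in> PP V E" using PP_sub[OF P(1), of "{z}"] z by blast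
  have "adj {z} X" if X: "X \<in> PP V E" "card X = 2" "z \<in> X" for X
  proof -
    have fX: "finite X" using PP_fin[OF G X(1)] .
    have "card (X - {z}) = 1" using X fX by simp
    then obtain w where w: "X - {z} = {w}" using card_1_singletonE by blast
    then have "X = insert w {z}" "w \<notin> {z}" using X(3) by auto
    then show ?thesis using adj_insert[of w "{z}"] by simp
  qed
  then show "\<exists>M\<in>PP V E. adj P M \<and> adj Q M" using Pz P Q z adj_sym by blast
qed

context iso1
begin

lemma common_iff:
  assumes "A \<in> PP V E" "B \<in> PP V E"
  shows "(\<exists>M\<in>PP V E. adj A M \<and> adj B M) \<longleftrightarrow> (\<exists>M'\<in>PP V' E'. adj (f A) M' \<and> adj (f B) M')"
proof
  assume "\<exists>M\<in>PP V E. adj A M \<and> adj B M"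
  then obtain M where M: "M \<in> PP V E" "adj A M" "adj B M" by blast
  then show "\<exists>M'\<in>PP V' E'. adj (f A) M' \<and> adj (f B) M'"
    using fP[OF M(1)] fadj[OF assms(1) M(1)] fadj[OF assms(2) M(1)] by blast
next
  assume "\<exists>M'\<in>PP V' E'. adj (f A) M' \<and> adj (f B) M'"
  then obtain M' where "M' \<in> PP V' E'" "adj (f A) M'" "adj (f B) M'" by blast
  then show "\<exists>M\<in>PP V E. adj A M \<and> adj B M" using common_pull[OF assms] by blast
qed

lemma g12: "v \<in> V \<Longrightarrow> card (f {v}) = 1 \<or> card (f {v}) = 2"
  using fcard_pos[OF PP_single[OF G]] nobig by force

definition W2 :: "'a set" where "W2 = {v \<in> V. card (f {v}) = 2}"

definition Rel :: "('a \<times> 'a) set" where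
  "Rel = {(u, w). u \<in> W2 \<and> w \<in> W2 \<and> u \<noteq> w \<and> (u, w) \<notin> E}"

lemma nbW2:
  assumes u: "u \<in> W2" and w: "w \<in> V" "w \<noteq> u" "(u, w) \<notin> E"
  shows "w \<in> W2"
proof -
  have uV: "u \<in> V" using u unfolding W2_def by blast
  have "{u, w} \<in> PP V E" using PP_pair[OF G uV w(1) w(3)] .
  then have "card (f {u}) = card (f {w})" using fact1 w(2) by metis
  then show ?thesis using u w(1) unfolding W2_def by simp
qed

lemma pair_card1:
  assumes u: "u \<in> W2" and w: "w \<in> W2" "w \<noteq> u" "(u, w) \<notin> E"
  shows "{u, w} \<in> PP V E" "card (f {u, w}) = 1"
proof -
  have uV: "u \<in> V" "w \<in> V" using u w unfolding W2_def by auto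
  show P: "{u, w} \<in> PP V E" using PP_pair[OF G uV w(3)] .
  have "\<forall>a\<in>{u, w}. card (f {a}) = 2" using u w unfolding W2_def by auto
  then have "card (f {u, w}) + card {u, w} = 2 + 1" using core[OF _ P] by simp
  then show "card (f {u, w}) = 1" using w(2) by simp
qed

lemma deg2:
  assumes u: "u \<in> W2"
  shows "card (nb Rel u) = 2"
proof -
  have uV: "u \<in> V" using u unfolding W2_def by blast
  have Pu: "{u} \<in> PP V E" using PP_single[OF G uV] .
  define A where "A = f {u}"
  have cA: "card A = 2" using u unfolding W2_def A_def by simp
  then obtain x1 x2 where x: "x1 \<noteq> x2" "A = {x1, x2}" by (rule card2_obtain)
  have PA: "A \<in> PP V' E'" using fP[OF Pu] unfolding A_def .
  have pre: "\<exists>y. y \<noteq> u \<and> {u, y} \<in> PP V E \<and> f {u, y} = {x}" if xA: "x \<in> A" for x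
  proof -
    have Px: "{x} \<in> PP V' E'" using PP_sub[OF PA, of "{x}"] xA by blast
    obtain x' where x': "x' \<in> A" "x' \<noteq> x" using x xA by blast
    have "A = insert x' {x}" "x' \<notin> {x}" using x x' xA by auto
    then have "adj {x} A" using adj_insert[of x' "{x}"] by simp
    then have ax: "adj {x} (f {u})" unfolding A_def .
    obtain P where P0: "P \<in> PP V E" "f P = {x}" using fsurj[OF Px] by blast
    have "adj P {u}" using fadj[OF P0(1) Pu] ax P0(2) by simp
    then have P: "P \<in> PP V E" "f P = {x}" "adj P {u}" using P0 by auto
    have "P \<noteq> {}" using PP_D[OF P(1)] by blast
    then obtain y where "y \<noteq> u" "P = {u, y}" using adj_single_nbr[OF adj_sym[OF P(3)]] by blast
    then show ?thesis using P by blast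
  qed
  obtain y1 where y1: "y1 \<noteq> u" "{u, y1} \<in> PP V E" "f {u, y1} = {x1}" using pre x(2) by blast
  obtain y2 where y2: "y2 \<noteq> u" "{u, y2} \<in> PP V E" "f {u, y2} = {x2}" using pre x(2) by blast
  have y12: "y1 \<noteq> y2" using y1(3) y2(3) x(1) by auto
  have inRel: "y \<in> nb Rel u" if "y \<noteq> u" "{u, y} \<in> PP V E" for y
  proof -
    have "y \<in> V" "(u, y) \<notin> E" using PP_pairD[OF that(2)] by auto
    then have "y \<in> W2" using nbW2[OF u] that(1) by blast
    then show ?thesis using u that(1) \<open>(u, y) \<notin> E\<close> unfolding nb_def Rel_def by auto
  qed
  have "nb Rel u = {y1, y2}"
  proof
    show "{y1, y2} \<subseteq> nb Rel u" using inRel y1 y2 by blast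
    show "nb Rel u \<subseteq> {y1, y2}"
    proof
      fix w assume "w \<in> nb Rel u"
      then have w: "w \<in> W2" "w \<noteq> u" "(u, w) \<notin> E" unfolding nb_def Rel_def by auto
      have Puw: "{u, w} \<in> PP V E" and c1: "card (f {u, w}) = 1" using pair_card1[OF u w] by auto
      have "adj {u} {u, w}" using adj_insert[of w "{u}"] w(2) by (simp add: insert_commute)
      then have aw: "adj A (f {u, w})" using fadj[OF Pu Puw] unfolding A_def by simp
      have "f {u, w} \<subseteq> A" using adj_up_subset[OF adj_sym[OF aw]] PP_fin[OF G' PA] c1 cA by simp
      moreover obtain z where z: "f {u, w} = {z}" using c1 card_1_singletonE by blast
      ultimately have "z = x1 \<or> z = x2" using x(2) by auto
      then have "f {u, w} = f {u, y1} \<or> f {u, w} = f {u, y2}" using z y1(3) y2(3) by auto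
      then have "{u, w} = {u, y1} \<or> {u, w} = {u, y2}" using finj Puw y1(2) y2(2) by blast
      then show "w \<in> {y1, y2}" using w(2) by (auto simp: doubleton_eq_iff)
    qed
  qed
  then show ?thesis using y12 by simp
qed

lemma reg: "reg2 W2 Rel"
  unfolding reg2_def
proof (intro conjI allI impI ballI)
  show "finite W2" using fgraphD(1)[OF G] unfolding W2_def by simp
  show "Rel \<subseteq> W2 \<times> W2" unfolding Rel_def by blast
  fix x y assume "(x, y) \<in> Rel" then show "(y, x) \<in> Rel"
    unfolding Rel_def using fgraphD(3)[OF G] by blast
next
  fix x show "(x, x) \<notin> Rel" unfolding Rel_def by blast
next
  fix u assume "u \<in> W2" then show "card (nb Rel u) = 2" by (rule deg2)
qed

end

context iso1
begin

lemma main_iso: "graph_iso V E V' E'"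
proof -
  obtain s where s: "orient W2 Rel s" using orient_exists[OF reg] by blast
  have sW: "\<And>x. x \<in> W2 \<Longrightarrow> s x \<in> W2 \<and> (x, s x) \<in> Rel \<and> s (s x) \<noteq> x"
    using s unfolding orient_def by blast
  define e where "e v = {v, s v}" for v
  have eP: "e v \<in> PP V E" "card (f (e v)) = 1" "card (e v) = 2" if v: "v \<in> W2" for v
  proof -
    have r: "s v \<in> W2" "s v \<noteq> v" "(v, s v) \<notin> E" using sW[OF v] unfolding Rel_def by auto
    show "e v \<in> PP V E" "card (f (e v)) = 1" unfolding e_def using pair_card1[OF v r] by auto
    show "card (e v) = 2" unfolding e_def using r(2) by simp
  qed
  define sg where "sg v = (if card (f {v}) = 1 then the_elem (f {v}) else the_elem (f (e v)))" for v
  have W2iff: "\<And>v. v \<in> V \<Longrightarrow> v \<in> W2 \<longleftrightarrow> card (f {v}) \<noteq> 1"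
    unfolding W2_def using g12 by force
  have sg1: "f {v} = {sg v}" if v: "v \<in> V" "card (f {v}) = 1" for v
  proof -
    obtain z where "f {v} = {z}" using v(2) card_1_singletonE by blast
    then show ?thesis unfolding sg_def using v(2) by simp
  qed
  have sg2: "f (e v) = {sg v}" if v: "v \<in> W2" for v
  proof -
    have "card (f {v}) \<noteq> 1" using v unfolding W2_def by simp
    moreover obtain z where "f (e v) = {z}" using eP(2)[OF v] card_1_singletonE by blast
    ultimately show ?thesis unfolding sg_def by simp
  qed
  have W2V: "\<And>v. v \<in> W2 \<Longrightarrow> v \<in> V" unfolding W2_def by blast
  have sgV: "sg v \<in> V'" if v: "v \<in> V" for v
  proof (cases "card (f {v}) = 1")
    case True
    then have "f {v} = {sg v}" using sg1 v by blast
    then show ?thesis using PP_D[OF fP[OF PP_single[OF G v]]] by blast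
  next
    case False
    then have "v \<in> W2" using W2iff v by blast
    then have "f (e v) = {sg v}" using sg2 by blast
    then show ?thesis using PP_D[OF fP[OF eP(1)[OF \<open>v \<in> W2\<close>]]] by blast
  qed
  interpret inv: iso1 V' E' V E "inv_into (PP V E) f" by (rule inv_iso)
  have finvf: "inv_into (PP V E) f (f I) = I" if "I \<in> PP V E" for I
    using inv_into_f_f[OF bij_betw_imp_inj_on[OF bij] that] .
  have Pv: "\<And>v. v \<in> V \<Longrightarrow> {v} \<in> PP V E" using PP_single[OF G] .
  have inj: "inj_on sg V"
  proof (rule inj_onI)
    fix x y assume xy: "x \<in> V" "y \<in> V" "sg x = sg y"
    consider "card (f {x}) = 1" "card (f {y}) = 1" | "x \<in> W2" "y \<in> W2"
      | "card (f {x}) = 1" "y \<in> W2" | "x \<in> W2" "card (f {y}) = 1"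
      using W2iff xy(1,2) by blast
    then show "x = y"
    proof cases
      case 1
      then have "f {x} = f {y}" using sg1[OF xy(1) 1(1)] sg1[OF xy(2) 1(2)] xy(3) by simp
      then show ?thesis using finj[OF Pv[OF xy(1)] Pv[OF xy(2)]] by blast
    next
      case 2
      then have "f (e x) = f (e y)" using sg2[OF 2(1)] sg2[OF 2(2)] xy(3) by simp
      then have "e x = e y" using finj eP(1) 2 by blast
      then show ?thesis using orient_pair_inj[OF s 2] unfolding e_def by blast
    next
      case 3
      then have "f {x} = f (e y)" using sg1[OF xy(1) 3(1)] sg2[OF 3(2)] xy(3) by simp
      then have "{x} = e y" using finj Pv[OF xy(1)] eP(1)[OF 3(2)] by blast
      then have "card (e y) = 1" by (metis is_singletonI is_singleton_altdef)
      then show ?thesis using eP(3)[OF 3(2)] by simp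
    next
      case 4
      then have "f {y} = f (e x)" using sg1[OF xy(2) 4(2)] sg2[OF 4(1)] xy(3) by simp
      then have "{y} = e x" using finj Pv[OF xy(2)] eP(1)[OF 4(1)] by blast
      then have "card (e x) = 1" by (metis is_singletonI is_singleton_altdef)
      then show ?thesis using eP(3)[OF 4(1)] by simp
    qed
  qed
  have surj: "sg ` V = V'"
  proof
    show "sg ` V \<subseteq> V'" using sgV by blast
    show "V' \<subseteq> sg ` V"
    proof
      fix x assume x: "x \<in> V'"
      have Px: "{x} \<in> PP V' E'" using PP_single[OF G' x] .
      define Q where "Q = inv_into (PP V E) f {x}"
      have PQ: "Q \<in> PP V E" unfolding Q_def using inv.fP[OF Px] .
      have fQ: "f Q = {x}" unfolding Q_def using f_inv_into_f[of "{x}" f "PP V E"] Px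
        bij_betw_imp_surj_on[OF bij] by simp
      have cQ: "card Q \<le> 2" using inv.nobig[OF x] unfolding Q_def .
      have cQ1: "card Q \<ge> 1" using inv.fcard_pos[OF Px] unfolding Q_def .
      show "x \<in> sg ` V"
      proof (cases "card Q = 1")
        case True
        then obtain u where u: "Q = {u}" using card_1_singletonE by blast
        then have uV: "u \<in> V" using PP_D[OF PQ] by blast
        have "card (f {u}) = 1" using fQ u by simp
        then have "f {u} = {sg u}" using sg1 uV by blast
        then have "sg u = x" using fQ u by simp
        then show ?thesis using uV by blast
      next
        case False
        then have "card Q = 2" using cQ cQ1 by simp
        then obtain u w where uw: "u \<noteq> w" "Q = {u, w}" by (rule card2_obtain)
        have uV: "u \<in> V" "w \<in> V" "(u, w) \<notin> E" using PP_pairD[of u w V E] PQ uw(2) by auto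
        have eqc: "card (f {u}) = card (f {w})" using fact1[OF uw(1)] PQ uw(2) by simp
        have "adj {u} Q" using adj_insert[of w "{u}"] uw by (simp add: insert_commute)
        then have "adj (f {u}) {x}" using fadj[OF Pv[OF uV(1)] PQ] fQ by simp
        then have "card {x} = Suc (card (f {u})) \<or> card (f {u}) = Suc (card {x})"
          using adj_card ffin[OF Pv[OF uV(1)]] by blast
        then have "card (f {u}) = 2" using fcard_pos[OF Pv[OF uV(1)]] by auto
        then have uW: "u \<in> W2" "w \<in> W2" using eqc uV unfolding W2_def by auto
        have "(u, w) \<in> Rel" using uW uw(1) uV(3) unfolding Rel_def by blast
        then have "w = s u \<or> s w = u" using orient_nbr[OF reg s uW(1)] by blast
        then have "Q = e u \<or> Q = e w" unfolding e_def using uw(2) by auto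
        then show ?thesis
        proof
          assume "Q = e u"
          then have "sg u = x" using sg2[OF uW(1)] fQ by simp
          then show ?thesis using uV(1) by blast
        next
          assume "Q = e w"
          then have "sg w = x" using sg2[OF uW(2)] fQ by simp
          then show ?thesis using uV(2) by blast
        qed
      qed
    qed
  qed
  have edges: "(x, y) \<in> E \<longleftrightarrow> (sg x, sg y) \<in> E'" if xy: "x \<in> V" "y \<in> V" for x y
  proof (cases "x = y")
    case True
    then show ?thesis using fgraphD(4)[OF G] fgraphD(4)[OF G'] by simp
  next
    case False
    have sne: "sg x \<noteq> sg y" using inj_onD[OF inj _ xy] False by blast
    have sxV: "sg x \<in> V'" "sg y \<in> V'" using sgV xy by auto
    have nE: "(x, y) \<notin> E \<longleftrightarrow> (\<exists>M\<in>PP V E. adj {x} M \<and> adj {y} M)"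
      using edge_common_nbr[OF G xy False] .
    have nE': "(sg x, sg y) \<notin> E' \<longleftrightarrow> (\<exists>M\<in>PP V' E'. adj {sg x} M \<and> adj {sg y} M)"
      using edge_common_nbr[OF G' sxV sne] .
    consider "card (f {x}) = 1" "card (f {y}) = 1" | "x \<in> W2" "y \<in> W2"
      | "card (f {x}) = 1" "y \<in> W2" | "x \<in> W2" "card (f {y}) = 1"
      using W2iff xy by blast
    then show ?thesis
    proof cases
      case 1
      have "(x, y) \<notin> E \<longleftrightarrow> (sg x, sg y) \<notin> E'"
        using nE nE' common_iff[OF Pv[OF xy(1)] Pv[OF xy(2)]] sg1[OF xy(1) 1(1)] sg1[OF xy(2) 1(2)] by simp
      then show ?thesis by blast
    next
      case 2
      have exy: "e x \<noteq> e y" using orient_pair_inj[OF s 2] False unfolding e_def by blast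
      have "(x, y) \<notin> E \<longleftrightarrow> (x, y) \<in> Rel" using 2 False unfolding Rel_def by blast
      also have "\<dots> \<longleftrightarrow> e x \<inter> e y \<noteq> {}" unfolding e_def using orient_share[OF reg s 2 False] .
      also have "\<dots> \<longleftrightarrow> (\<exists>M\<in>PP V E. adj (e x) M \<and> adj (e y) M)"
        using pairs_common[OF G eP(1)[OF 2(1)] eP(3)[OF 2(1)] eP(1)[OF 2(2)] eP(3)[OF 2(2)] exy] by simp
      also have "\<dots> \<longleftrightarrow> (\<exists>M'\<in>PP V' E'. adj {sg x} M' \<and> adj {sg y} M')"
        using common_iff[OF eP(1)[OF 2(1)] eP(1)[OF 2(2)]] sg2[OF 2(1)] sg2[OF 2(2)] by simp
      also have "\<dots> \<longleftrightarrow> (sg x, sg y) \<notin> E'" using nE' by simp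
      finally show ?thesis by blast
    next
      case 3
      have xW: "x \<notin> W2" using 3 unfolding W2_def by simp
      have "(x, y) \<in> E"
      proof (rule ccontr)
        assume "(x, y) \<notin> E"
        then have "y \<in> W2 \<Longrightarrow> x \<in> W2" using nbW2[of y x] xy False fgraphD(3)[OF G] by blast
        then show False using xW 3(2) by blast
      qed
      moreover have "(sg x, sg y) \<in> E'"
      proof (rule ccontr)
        assume "(sg x, sg y) \<notin> E'"
        then have "{sg x, sg y} \<in> PP V' E'" using PP_pair[OF G' sxV] by blast
        then have c: "card (inv_into (PP V E) f {sg x}) = card (inv_into (PP V E) f {sg y})"
          using inv.fact1[OF sne] by blast
        have "inv_into (PP V E) f {sg x} = {x}" using sg1[OF xy(1) 3(1)] finvf[OF Pv[OF xy(1)]] by simp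
        moreover have "inv_into (PP V E) f {sg y} = e y" using sg2[OF 3(2)] finvf[OF eP(1)[OF 3(2)]] by simp
        ultimately show False using c eP(3)[OF 3(2)] by simp
      qed
      ultimately show ?thesis by blast
    next
      case 4
      have yW: "y \<notin> W2" using 4 unfolding W2_def by simp
      have "(x, y) \<in> E"
      proof (rule ccontr)
        assume "(x, y) \<notin> E"
        then have "y \<in> W2" using nbW2[of x y] xy False 4(1) by blast
        then show False using yW by blast
      qed
      moreover have "(sg x, sg y) \<in> E'"
      proof (rule ccontr)
        assume "(sg x, sg y) \<notin> E'"
        then have "{sg x, sg y} \<in> PP V' E'" using PP_pair[OF G' sxV] by blast
        then have c: "card (inv_into (PP V E) f {sg x}) = card (inv_into (PP V E) f {sg y})"
          using inv.fact1[OF sne] by blast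
        have "inv_into (PP V E) f {sg y} = {y}" using sg1[OF xy(2) 4(2)] finvf[OF Pv[OF xy(2)]] by simp
        moreover have "inv_into (PP V E) f {sg x} = e x" using sg2[OF 4(1)] finvf[OF eP(1)[OF 4(1)]] by simp
        ultimately show False using c eP(3)[OF 4(1)] by simp
      qed
      ultimately show ?thesis by blast
    qed
  qed
  have "bij_betw sg V V'" using inj surj unfolding bij_betw_def by blast
  then show ?thesis unfolding graph_iso_def using edges by blast
qed

end

definition QQ :: "'a set \<Rightarrow> ('a \<times> 'a) set \<Rightarrow> 'a set set" where
  "QQ V E = {I. indep V E I}"

lemma rverts_TAR0: "rverts TAR V E 0 = QQ V E"
  unfolding QQ_def by simp

lemma QQ_PP: "PP V E = QQ V E - {{}}"
  unfolding PP_def QQ_def by blast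

lemma QQ_empty: "{} \<in> QQ V E"
  unfolding QQ_def indep_def by blast


lemma NB_empty:
  assumes G: "fgraph V E"
  shows "card {J \<in> QQ V E. adj {} J} = card V"
proof -
  have "{J \<in> QQ V E. adj {} J} = (\<lambda>v. {v}) ` V"
  proof
    show "{J \<in> QQ V E. adj {} J} \<subseteq> (\<lambda>v. {v}) ` V"
    proof
      fix J assume "J \<in> {J \<in> QQ V E. adj {} J}"
      then have J: "J \<in> QQ V E" "adj {} J" by auto
      then obtain x where "J = {x}" unfolding adj_iff by blast
      moreover then have "x \<in> V" using J(1) unfolding QQ_def indep_def by blast
      ultimately show "J \<in> (\<lambda>v. {v}) ` V" by blast
    qed
    show "(\<lambda>v. {v}) ` V \<subseteq> {J \<in> QQ V E. adj {} J}"
    proof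
      fix J assume "J \<in> (\<lambda>v. {v}) ` V"
      then obtain v where v: "v \<in> V" "J = {v}" by blast
      have "{v} \<in> PP V E" using PP_single[OF G v(1)] .
      then have "J \<in> QQ V E" using v QQ_PP by blast
      moreover have "adj {} J" using v adj_insert[of v "{}"] by simp
      ultimately show "J \<in> {J \<in> QQ V E. adj {} J}" by blast
    qed
  qed
  moreover have "inj_on (\<lambda>v. {v}) V" by (rule inj_onI) simp
  ultimately show ?thesis using card_image[of "\<lambda>v. {v}" V] by simp
qed

lemma NB_le:
  assumes G: "fgraph V E" and A: "A \<in> QQ V E"
  shows "card {J \<in> QQ V E. adj A J} \<le> card V"
    and "card {J \<in> QQ V E. adj A J} = card V \<Longrightarrow> x \<in> V \<Longrightarrow> x \<notin> A \<Longrightarrow> insert x A \<in> QQ V E"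
proof -
  define h where "h x = (A - {x}) \<union> ({x} - A)" for x
  have AV: "A \<subseteq> V" using A unfolding QQ_def indep_def by blast
  have finV: "finite V" using fgraphD(1)[OF G] .
  have sub: "{J \<in> QQ V E. adj A J} \<subseteq> h ` V"
  proof
    fix J assume "J \<in> {J \<in> QQ V E. adj A J}"
    then have J: "J \<in> QQ V E" "adj A J" by auto
    have JV: "J \<subseteq> V" using J(1) unfolding QQ_def indep_def by blast
    from J(2) consider x where "x \<notin> A" "J = insert x A" | x where "x \<notin> J" "A = insert x J"
      unfolding adj_iff by blast
    then show "J \<in> h ` V"
    proof cases
      case 1
      then have "J = h x" "x \<in> V" unfolding h_def using JV by auto
      then show ?thesis by blast
    next
      case 2
      then have "J = h x" "x \<in> V" unfolding h_def using AV by auto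
      then show ?thesis by blast
    qed
  qed
  have hinj: "inj_on h V"
  proof (rule inj_onI)
    fix x y assume "x \<in> V" "y \<in> V" "h x = h y"
    then have "x \<in> h y \<longleftrightarrow> x \<notin> A" unfolding h_def by auto
    then show "x = y" unfolding h_def by auto
  qed
  have ch: "card (h ` V) = card V" using card_image[OF hinj] .
  have finh: "finite (h ` V)" using finV by simp
  show "card {J \<in> QQ V E. adj A J} \<le> card V" using card_mono[OF finh sub] ch by simp
  assume eq: "card {J \<in> QQ V E. adj A J} = card V" and x: "x \<in> V" "x \<notin> A"
  have "{J \<in> QQ V E. adj A J} = h ` V" using card_subset_eq[OF finh sub] eq ch by simp
  moreover have "h x = insert x A" unfolding h_def using x(2) by auto
  ultimately show "insert x A \<in> QQ V E" using x(1) by blast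
qed

lemma tar0_reduce:
  assumes G: "fgraph V E" and G': "fgraph V' E'"
    and bij: "bij_betw f (QQ V E) (QQ V' E')"
    and fadj: "\<And>I J. I \<in> QQ V E \<Longrightarrow> J \<in> QQ V E \<Longrightarrow> adj (f I) (f J) \<longleftrightarrow> adj I J"
  shows "card V \<le> card V'"
    and "card V = card V' \<Longrightarrow> card {J \<in> QQ V' E'. adj (f {}) J} = card V'"
proof -
  have im: "f ` {J \<in> QQ V E. adj {} J} = {J \<in> QQ V' E'. adj (f {}) J}"
  proof
    show "f ` {J \<in> QQ V E. adj {} J} \<subseteq> {J \<in> QQ V' E'. adj (f {}) J}"
    proof
      fix J' assume "J' \<in> f ` {J \<in> QQ V E. adj {} J}"
      then obtain J where J: "J \<in> QQ V E" "adj {} J" "J' = f J" by blast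
      have "adj (f {}) (f J)" using fadj[OF QQ_empty J(1)] J(2) by simp
      then show "J' \<in> {J \<in> QQ V' E'. adj (f {}) J}" using bij_betw_apply[OF bij J(1)] J(3) by simp
    qed
    show "{J \<in> QQ V' E'. adj (f {}) J} \<subseteq> f ` {J \<in> QQ V E. adj {} J}"
    proof
      fix J' assume "J' \<in> {J \<in> QQ V' E'. adj (f {}) J}"
      then have J': "J' \<in> QQ V' E'" "adj (f {}) J'" by auto
      then have "J' \<in> f ` QQ V E" using bij_betw_imp_surj_on[OF bij] by simp
      then obtain J where J: "J \<in> QQ V E" "J' = f J" by blast
      then have "adj {} J" using fadj[OF QQ_empty J(1)] J'(2) by simp
      then show "J' \<in> f ` {J \<in> QQ V E. adj {} J}" using J by blast
    qed
  qed
  have "inj_on f {J \<in> QQ V E. adj {} J}"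
    using bij_betw_imp_inj_on[OF bij] by (rule inj_on_subset) blast
  then have "card (f ` {J \<in> QQ V E. adj {} J}) = card {J \<in> QQ V E. adj {} J}"
    by (rule card_image)
  then have "card {J \<in> QQ V' E'. adj (f {}) J} = card {J \<in> QQ V E. adj {} J}"
    using im by simp
  also have "\<dots> = card V" using NB_empty[OF G] .
  finally have c: "card {J \<in> QQ V' E'. adj (f {}) J} = card V" .
  have fe: "f {} \<in> QQ V' E'" using bij_betw_apply[OF bij QQ_empty] .
  show "card V \<le> card V'" using NB_le(1)[OF G' fe] c by simp
  show "card V = card V' \<Longrightarrow> card {J \<in> QQ V' E'. adj (f {}) J} = card V'" using c by simp
qed

lemma tar0_iso:
  assumes G: "fgraph V E" and G': "fgraph V' E'"
    and bij: "bij_betw f (QQ V E) (QQ V' E')"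
    and fadj: "\<And>I J. I \<in> QQ V E \<Longrightarrow> J \<in> QQ V E \<Longrightarrow> adj (f I) (f J) \<longleftrightarrow> adj I J"
  shows "graph_iso V E V' E'"
proof -
  define g where "g = inv_into (QQ V E) f"
  have bijg: "bij_betw g (QQ V' E') (QQ V E)" unfolding g_def using bij_betw_inv_into[OF bij] .
  have gadj: "adj (g I) (g J) \<longleftrightarrow> adj I J" if IJ: "I \<in> QQ V' E'" "J \<in> QQ V' E'" for I J
  proof -
    have Ii: "I \<in> f ` QQ V E" "J \<in> f ` QQ V E" using IJ bij_betw_imp_surj_on[OF bij] by auto
    have gg: "g I \<in> QQ V E" "g J \<in> QQ V E" "f (g I) = I" "f (g J) = J"
      unfolding g_def using inv_into_into[OF Ii(1)] inv_into_into[OF Ii(2)]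
        f_inv_into_f[OF Ii(1)] f_inv_into_f[OF Ii(2)] by auto
    show ?thesis using fadj[OF gg(1,2)] gg(3,4) by simp
  qed
  have c1: "card V \<le> card V'" using tar0_reduce(1)[OF G G' bij fadj] .
  have c2: "card V' \<le> card V" using tar0_reduce(1)[OF G' G bijg gadj] .
  have cNB: "card {J \<in> QQ V' E'. adj (f {}) J} = card V'"
    using tar0_reduce(2)[OF G G' bij fadj] c1 c2 by simp
  define A where "A = f {}"
  have AQ: "A \<in> QQ V' E'" unfolding A_def using bij_betw_apply[OF bij QQ_empty] .
  have AV: "A \<subseteq> V'" using AQ unfolding QQ_def indep_def by blast
  have Esym: "\<And>x y. (x, y) \<in> E' \<Longrightarrow> (y, x) \<in> E'" using fgraphD(3)[OF G'] .
  have iso: "(a, x) \<notin> E'" if a: "a \<in> A" for a x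
  proof (cases "x \<in> V'")
    case False
    have "E' \<subseteq> V' \<times> V'" using fgraphD(2)[OF G'] .
    then show ?thesis using False by blast
  next
    case True
    show ?thesis
    proof (cases "x \<in> A")
      case True then show ?thesis using AQ a unfolding QQ_def indep_def by blast
    next
      case False
      have cNB': "card {J \<in> QQ V' E'. adj A J} = card V'" using cNB unfolding A_def .
      have "insert x A \<in> QQ V' E'" using NB_le(2)[OF G' AQ cNB' \<open>x \<in> V'\<close> False] .
      then show ?thesis using a unfolding QQ_def indep_def by blast
    qed
  qed
  define t where "t J = (J - A) \<union> (A - J)" for J
  have tt: "t (t J) = J" for J unfolding t_def by blast
  have tQ: "t J \<in> QQ V' E'" if J: "J \<in> QQ V' E'" for J
  proof -
    have JV: "J \<subseteq> V'" and Ji: "\<forall>x\<in>J. \<forall>y\<in>J. (x, y) \<notin> E'" using J unfolding QQ_def indep_def by auto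
    have "t J \<subseteq> V'" unfolding t_def using JV AV by blast
    moreover have "\<forall>x\<in>t J. \<forall>y\<in>t J. (x, y) \<notin> E'"
    proof (intro ballI)
      fix x y assume xy: "x \<in> t J" "y \<in> t J"
      show "(x, y) \<notin> E'"
      proof (cases "x \<in> A")
        case True then show ?thesis using iso by blast
      next
        case False
        show ?thesis
        proof (cases "y \<in> A")
          case True then show ?thesis using iso Esym by blast
        next
          case False
          then have "x \<in> J" "y \<in> J" using xy \<open>x \<notin> A\<close> unfolding t_def by auto
          then show ?thesis using Ji by blast
        qed
      qed
    qed
    ultimately show ?thesis unfolding QQ_def indep_def by blast
  qed
  have tadj: "adj (t I) (t J) \<longleftrightarrow> adj I J" for I J
  proof -
    have "(t I - t J) \<union> (t J - t I) = (I - J) \<union> (J - I)" unfolding t_def by blast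
    then show ?thesis unfolding adj_def by simp
  qed
  have bijt: "bij_betw t (QQ V' E') (QQ V' E')"
    by (rule bij_betw_byWitness[of _ t]) (auto simp: tQ tt)
  define F where "F = t \<circ> f"
  have bijF: "bij_betw F (QQ V E) (QQ V' E')" unfolding F_def using bij_betw_trans[OF bij bijt] .
  have Fadj: "adj (F I) (F J) \<longleftrightarrow> adj I J" if "I \<in> QQ V E" "J \<in> QQ V E" for I J
    unfolding F_def using tadj fadj[OF that] by simp
  have F0: "F {} = {}" unfolding F_def t_def A_def by simp
  have bijP: "bij_betw F (PP V E) (PP V' E')"
  proof -
    have injF: "inj_on F (QQ V E)" using bij_betw_imp_inj_on[OF bijF] .
    have "inj_on F (PP V E)" using inj_on_subset[OF injF] QQ_PP[of V E] by blast
    moreover have "F ` PP V E = PP V' E'"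
    proof -
      have "F ` PP V E = F ` (QQ V E - {{}})" using QQ_PP[of V E] by simp
      also have "\<dots> = F ` QQ V E - F ` {{}}"
      proof (rule inj_on_image_set_diff[OF injF])
        show "QQ V E - {{}} \<subseteq> QQ V E" by (rule Diff_subset)
        show "{{}} \<subseteq> QQ V E" using QQ_empty by blast
      qed
      also have "F ` QQ V E = QQ V' E'" using bij_betw_imp_surj_on[OF bijF] .
      also have "F ` {{}} = {{}}" using F0 by simp
      finally show ?thesis using QQ_PP[of V' E'] by simp
    qed
    ultimately show ?thesis unfolding bij_betw_def by blast
  qed
  have "iso1 V E V' E' F"
  proof
    show "fgraph V E" by (rule G)
    show "fgraph V' E'" by (rule G')
    show "bij_betw F (PP V E) (PP V' E')" by (rule bijP)
    fix I J assume "I \<in> PP V E" "J \<in> PP V E"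
    then have "I \<in> QQ V E" "J \<in> QQ V E" using QQ_PP[of V E] by auto
    then show "adj (F I) (F J) \<longleftrightarrow> adj I J" by (rule Fadj)
  qed
  then show ?thesis by (rule iso1.main_iso)
qed

lemma graph_iso_TAR:
  assumes "graph_iso (rverts TAR V E k) (redges TAR V E k) (rverts TAR V' E' k) (redges TAR V' E' k)"
  shows "\<exists>f. bij_betw f (rverts TAR V E k) (rverts TAR V' E' k) \<and>
    (\<forall>I\<in>rverts TAR V E k. \<forall>J\<in>rverts TAR V E k. adj (f I) (f J) \<longleftrightarrow> adj I J)"
proof -
  obtain f where f: "bij_betw f (rverts TAR V E k) (rverts TAR V' E' k)"
    and fe: "\<forall>x\<in>rverts TAR V E k. \<forall>y\<in>rverts TAR V E k.
       (x, y) \<in> redges TAR V E k \<longleftrightarrow> (f x, f y) \<in> redges TAR V' E' k"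
    using assms unfolding graph_iso_def by blast
  have "adj (f I) (f J) \<longleftrightarrow> adj I J" if IJ: "I \<in> rverts TAR V E k" "J \<in> rverts TAR V E k" for I J
  proof -
    have "f I \<in> rverts TAR V' E' k" "f J \<in> rverts TAR V' E' k" using bij_betw_apply[OF f] IJ by auto
    then have "(f I, f J) \<in> redges TAR V' E' k \<longleftrightarrow> adj (f I) (f J)" unfolding redges_TAR by simp
    moreover have "(I, J) \<in> redges TAR V E k \<longleftrightarrow> adj I J" using IJ unfolding redges_TAR by simp
    ultimately show ?thesis using fe IJ by blast
  qed
  then show ?thesis using f by blast
qed

lemma tar1_iso:
  assumes G: "fgraph V E" and G': "fgraph V' E'"
    and iso: "graph_iso (rverts TAR V E (Suc 0)) (redges TAR V E (Suc 0)) (rverts TAR V' E' (Suc 0)) (redges TAR V' E' (Suc 0))"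
  shows "graph_iso V E V' E'"
proof -
  obtain f where f: "bij_betw f (PP V E) (PP V' E')"
    and fa: "\<forall>I\<in>PP V E. \<forall>J\<in>PP V E. adj (f I) (f J) \<longleftrightarrow> adj I J"
    using graph_iso_TAR[OF iso] unfolding rverts_TAR1[OF G] rverts_TAR1[OF G'] by blast
  have "iso1 V E V' E' f"
  proof
    show "fgraph V E" by (rule G)
    show "fgraph V' E'" by (rule G')
    show "bij_betw f (PP V E) (PP V' E')" by (rule f)
    fix I J assume "I \<in> PP V E" "J \<in> PP V E"
    then show "adj (f I) (f J) \<longleftrightarrow> adj I J" using fa by blast
  qed
  then show ?thesis by (rule iso1.main_iso)
qed

lemma tar0_iso':
  assumes G: "fgraph V E" and G': "fgraph V' E'"
    and iso: "graph_iso (rverts TAR V E 0) (redges TAR V E 0) (rverts TAR V' E' 0) (redges TAR V' E' 0)"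
  shows "graph_iso V E V' E'"
proof -
  obtain f where f: "bij_betw f (QQ V E) (QQ V' E')"
    and fa: "\<forall>I\<in>QQ V E. \<forall>J\<in>QQ V E. adj (f I) (f J) \<longleftrightarrow> adj I J"
    using graph_iso_TAR[OF iso] unfolding rverts_TAR0 by blast
  show ?thesis
  proof (rule tar0_iso[OF G G' f])
    fix I J assume "I \<in> QQ V E" "J \<in> QQ V E"
    then show "adj (f I) (f J) \<longleftrightarrow> adj I J" using fa by blast
  qed
qed

lemma rvTS1:
  assumes G: "fgraph V E"
  shows "rverts TS V E (Suc 0) = (\<lambda>v. {v}) ` V"
proof
  show "rverts TS V E (Suc 0) \<subseteq> (\<lambda>v. {v}) ` V"
  proof
    fix I assume "I \<in> rverts TS V E (Suc 0)"
    then have I: "indep V E I" "card I = 1" by auto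
    then obtain x where "I = {x}" using card_1_singletonE by blast
    moreover then have "x \<in> V" using I(1) unfolding indep_def by blast
    ultimately show "I \<in> (\<lambda>v. {v}) ` V" by blast
  qed
  show "(\<lambda>v. {v}) ` V \<subseteq> rverts TS V E (Suc 0)"
  proof
    fix I assume "I \<in> (\<lambda>v. {v}) ` V"
    then obtain v where v: "v \<in> V" "I = {v}" by blast
    have "(v, v) \<notin> E" using fgraphD(4)[OF G] by blast
    then have "indep V E {v}" using v(1) unfolding indep_def by blast
    then show "I \<in> rverts TS V E (Suc 0)" using v(2) by simp
  qed
qed

lemma reTS1:
  assumes G: "fgraph V E" and ab: "a \<in> V" "b \<in> V"
  shows "({a}, {b}) \<in> redges TS V E (Suc 0) \<longleftrightarrow> (a, b) \<in> E"
proof -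
  have ina: "{a} \<in> rverts TS V E (Suc 0)" "{b} \<in> rverts TS V E (Suc 0)" using rvTS1[OF G] ab by auto
  show ?thesis
  proof (cases "a = b")
    case True
    then show ?thesis using fgraphD(4)[OF G] by simp
  next
    case False
    then have "{a} - {b} = {a}" "{b} - {a} = {b}" by auto
    then show ?thesis using ina by simp
  qed
qed

lemma ts1_iso:
  assumes G: "fgraph V E" and G': "fgraph V' E'"
    and iso: "graph_iso (rverts TS V E (Suc 0)) (redges TS V E (Suc 0)) (rverts TS V' E' (Suc 0)) (redges TS V' E' (Suc 0))"
  shows "graph_iso V E V' E'"
proof -
  obtain f where f: "bij_betw f ((\<lambda>v. {v}) ` V) ((\<lambda>v. {v}) ` V')"
    and fe: "\<forall>x\<in>(\<lambda>v. {v}) ` V. \<forall>y\<in>(\<lambda>v. {v}) ` V.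
       (x, y) \<in> redges TS V E (Suc 0) \<longleftrightarrow> (f x, f y) \<in> redges TS V' E' (Suc 0)"
    using iso unfolding graph_iso_def rvTS1[OF G] rvTS1[OF G'] by blast
  define sg where "sg v = the_elem (f {v})" for v
  have sg: "sg v \<in> V' \<and> f {v} = {sg v}" if v: "v \<in> V" for v
  proof -
    have "f {v} \<in> (\<lambda>v. {v}) ` V'" using bij_betw_apply[OF f] v by blast
    then obtain x where "x \<in> V'" "f {v} = {x}" by blast
    then show ?thesis unfolding sg_def by simp
  qed
  have injf: "inj_on f ((\<lambda>v. {v}) ` V)" using bij_betw_imp_inj_on[OF f] .
  have inj: "inj_on sg V"
  proof (rule inj_onI)
    fix x y assume xy: "x \<in> V" "y \<in> V" "sg x = sg y"
    then have "f {x} = f {y}" using sg by metis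
    then have "{x} = {y}" using inj_onD[OF injf] xy(1,2) by blast
    then show "x = y" by simp
  qed
  have surj: "sg ` V = V'"
  proof
    show "sg ` V \<subseteq> V'" using sg by blast
    show "V' \<subseteq> sg ` V"
    proof
      fix x assume "x \<in> V'"
      then have "{x} \<in> f ` ((\<lambda>v. {v}) ` V)" using bij_betw_imp_surj_on[OF f] by blast
      then obtain v where v: "v \<in> V" "f {v} = {x}" by blast
      then have "sg v = x" using sg by simp
      then show "x \<in> sg ` V" using v(1) by blast
    qed
  qed
  have edges: "(x, y) \<in> E \<longleftrightarrow> (sg x, sg y) \<in> E'" if xy: "x \<in> V" "y \<in> V" for x y
  proof -
    have "(x, y) \<in> E \<longleftrightarrow> ({x}, {y}) \<in> redges TS V E (Suc 0)" using reTS1[OF G xy] by simp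
    also have "\<dots> \<longleftrightarrow> (f {x}, f {y}) \<in> redges TS V' E' (Suc 0)" using fe xy by blast
    also have "\<dots> \<longleftrightarrow> ({sg x}, {sg y}) \<in> redges TS V' E' (Suc 0)" using sg xy by simp
    also have "\<dots> \<longleftrightarrow> (sg x, sg y) \<in> E'" using reTS1[OF G'] sg xy by blast
    finally show ?thesis .
  qed
  have "bij_betw sg V V'" using inj surj unfolding bij_betw_def by blast
  then show ?thesis unfolding graph_iso_def using edges by blast
qed

lemma graph_iso_same: "graph_iso A B A B"
  unfolding graph_iso_def by (intro exI[of _ id]) simp

lemma fg_K1: "fgraph {0::nat} {}"
  unfolding fgraph_def sym_def by simp

lemma fg_2K1: "fgraph {0::nat, 1} {}"
  unfolding fgraph_def sym_def by simp

lemma fg_K2: "fgraph {0::nat, 1} {(0, 1), (1, 0)}"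
  unfolding fgraph_def sym_def by auto

lemma not_iso_K1_K2: "\<not> graph_iso {0::nat} {} {0::nat, 1} {(0, 1), (1, 0)}"
proof
  assume "graph_iso {0::nat} {} {0::nat, 1} {(0, 1), (1, 0)}"
  then obtain f :: "nat \<Rightarrow> nat" where "bij_betw f {0} {0, 1}" unfolding graph_iso_def by blast
  then have "card {0::nat} = card {0::nat, 1}" by (rule bij_betw_same_card)
  then show False by simp
qed

lemma not_iso_2K1_K2: "\<not> graph_iso {0::nat, 1} {} {0::nat, 1} {(0, 1), (1, 0)}"
proof
  assume "graph_iso {0::nat, 1} {} {0::nat, 1} {(0, 1), (1, 0)}"
  then obtain f :: "nat \<Rightarrow> nat" where f: "bij_betw f {0, 1} {0, 1}"
    and e: "\<forall>x\<in>{0::nat, 1}. \<forall>y\<in>{0::nat, 1}. (x, y) \<in> ({} :: (nat \<times> nat) set) \<longleftrightarrow> (f x, f y) \<in> {(0, 1), (1, 0)}"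
    unfolding graph_iso_def by blast
  have "f 0 \<noteq> f 1" using inj_onD[OF bij_betw_imp_inj_on[OF f], of 0 1] by auto
  moreover have "f 0 \<in> {0, 1}" "f 1 \<in> {0, 1}" using bij_betw_apply[OF f] by auto
  moreover have "(f 0, f 1) \<notin> {(0, 1), (1, 0)}" using e by auto
  ultimately show False by auto
qed

lemma redges_sub: "(I, J) \<in> redges R V E k \<Longrightarrow> I \<in> rverts R V E k"
  by (cases R) auto

lemma indep_fin: "fgraph V E \<Longrightarrow> indep V E I \<Longrightarrow> finite I"
proof -
  assume "fgraph V E" "indep V E I"
  then have "I \<subseteq> V" "finite V" using fgraphD(1)[of V E] unfolding indep_def by auto
  then show ?thesis by (rule finite_subset)
qed

lemma rv_small:
  assumes small: "\<And>I. indep V E I \<Longrightarrow> card I \<le> 1" and k: "k \<ge> 2"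
  shows "rverts R V E k = {}" "redges R V E k = {}"
proof -
  have mem: "indep V E I \<and> k \<le> card I" if "I \<in> rverts R V E k" for I
    using that by (cases R) auto
  show rv: "rverts R V E k = {}"
  proof (rule ccontr)
    assume "rverts R V E k \<noteq> {}"
    then obtain I where "I \<in> rverts R V E k" by blast
    then have "indep V E I" "k \<le> card I" using mem by auto
    then show False using small k by fastforce
  qed
  show "redges R V E k = {}"
  proof (rule ccontr)
    assume "redges R V E k \<noteq> {}"
    then obtain I J where "(I, J) \<in> redges R V E k" by auto
    then show False using redges_sub rv by blast
  qed
qed

lemma small_K1: "indep {0::nat} {} I \<Longrightarrow> card I \<le> 1"
proof -
  assume "indep {0::nat} {} I"
  then have "I \<subseteq> {0}" unfolding indep_def by blast
  then show "card I \<le> 1" using card_mono[of "{0::nat}" I] by simp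
qed

lemma small_K2: "indep {0::nat, 1} {(0, 1), (1, 0)} I \<Longrightarrow> card I \<le> 1"
proof -
  assume a: "indep {0::nat, 1} {(0, 1), (1, 0)} I"
  then have "I \<subseteq> {0, 1}" "\<not> (0 \<in> I \<and> 1 \<in> I)" unfolding indep_def by auto
  then have "I \<subseteq> {0} \<or> I \<subseteq> {1}" by auto
  then show "card I \<le> 1" using card_mono[of "{0::nat}" I] card_mono[of "{1::nat}" I] by auto
qed

lemma rv0:
  assumes G: "fgraph V E" and R: "R \<noteq> TAR"
  shows "rverts R V E 0 = {{}}" "redges R V E 0 = {}"
proof -
  have mem: "I \<in> rverts R V E 0 \<longleftrightarrow> indep V E I \<and> card I = 0" for I
    using R by (cases R) auto
  have key: "I \<in> rverts R V E 0 \<longleftrightarrow> I = {}" for I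
  proof
    assume "I \<in> rverts R V E 0"
    then have "indep V E I" "card I = 0" using mem by auto
    then show "I = {}" using indep_fin[OF G] by auto
  next
    assume "I = {}"
    moreover have "indep V E {}" unfolding indep_def by simp
    ultimately show "I \<in> rverts R V E 0" using mem by simp
  qed
  show rv: "rverts R V E 0 = {{}}" using key by blast
  show "redges R V E 0 = {}"
  proof (rule ccontr)
    assume "redges R V E 0 \<noteq> {}"
    then obtain I J where IJ: "(I, J) \<in> redges R V E 0" by auto
    then have "I \<in> rverts R V E 0" using redges_sub by blast
    have "J \<in> rverts R V E 0" using IJ R by (cases R) auto
    have "\<exists>u. I - J = {u}" using IJ R by (cases R) auto
    then show False using \<open>I \<in> rverts R V E 0\<close> key by auto
  qed
qed

lemma rvTJ1:
  "rverts TJ {0::nat, 1} {} (Suc 0) = rverts TJ {0::nat, 1} {(0, 1), (1, 0)} (Suc 0)"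
proof -
  have "(indep {0::nat, 1} {} I \<and> card I = Suc 0) \<longleftrightarrow> (indep {0::nat, 1} {(0, 1), (1, 0)} I \<and> card I = Suc 0)" for I
  proof (cases "card I = Suc 0")
    case True
    then have "card I = 1" by simp
    then obtain x where x: "I = {x}" by (rule card_1_singletonE)
    have "indep {0::nat, 1} {} {x} \<longleftrightarrow> x \<in> {0, 1}" unfolding indep_def by simp
    moreover have "indep {0::nat, 1} {(0, 1), (1, 0)} {x} \<longleftrightarrow> x \<in> {0, 1}" unfolding indep_def by auto
    ultimately show ?thesis using x True by simp
  next
    case False then show ?thesis by simp
  qed
  then show ?thesis by simp
qed

theorem theorem1p8:
  fixes R :: rule and k :: nat
  shows "((R = TS \<and> k = 1) \<or> (R = TAR \<and> k \<le> 1) \<longrightarrow>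
           (\<forall>(V :: 'a set) E (V' :: 'b set) E'. fgraph V E \<longrightarrow> fgraph V' E' \<longrightarrow>
              graph_iso (rverts R V E k) (redges R V E k) (rverts R V' E' k) (redges R V' E' k) \<longrightarrow>
              graph_iso V E V' E'))
       \<and> (\<not> ((R = TS \<and> k = 1) \<or> (R = TAR \<and> k \<le> 1)) \<longrightarrow>
           (\<exists>(V :: nat set) E (V' :: nat set) E'. fgraph V E \<and> fgraph V' E' \<and>
              \<not> graph_iso V E V' E' \<and>
              graph_iso (rverts R V E k) (redges R V E k) (rverts R V' E' k) (redges R V' E' k)))"
proof (intro conjI impI allI)
  fix V :: "'a set" and E :: "('a \<times> 'a) set" and V' :: "'b set" and E' :: "('b \<times> 'b) set"
  assume h: "(R = TS \<and> k = 1) \<or> (R = TAR \<and> k \<le> 1)" and G: "fgraph V E" and G': "fgraph V' E'"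
    and iso: "graph_iso (rverts R V E k) (redges R V E k) (rverts R V' E' k) (redges R V' E' k)"
  consider "R = TS" "k = Suc 0" | "R = TAR" "k = 0" | "R = TAR" "k = Suc 0" using h by force
  then show "graph_iso V E V' E'"
  proof cases
    case 1 then show ?thesis using ts1_iso[OF G G'] iso by simp
  next
    case 2 then show ?thesis using tar0_iso'[OF G G'] iso by simp
  next
    case 3 then show ?thesis using tar1_iso[OF G G'] iso by simp
  qed
next
  assume h: "\<not> ((R = TS \<and> k = 1) \<or> (R = TAR \<and> k \<le> 1))"
  have k3: "k = 0 \<or> k = Suc 0 \<or> k \<ge> 2" by arith
  have RJ: "k = Suc 0 \<Longrightarrow> R = TJ" using h by (cases R) auto
  have R0: "k = 0 \<Longrightarrow> R \<noteq> TAR" using h by auto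
  consider "k = 0" "R \<noteq> TAR" | "k = Suc 0" "R = TJ" | "k \<ge> 2" using k3 RJ R0 by blast
  then show "\<exists>(V :: nat set) E (V' :: nat set) E'. fgraph V E \<and> fgraph V' E' \<and>
              \<not> graph_iso V E V' E' \<and>
              graph_iso (rverts R V E k) (redges R V E k) (rverts R V' E' k) (redges R V' E' k)"
  proof cases
    case 1
    have "graph_iso (rverts R {0::nat} {} k) (redges R {0::nat} {} k)
        (rverts R {0::nat, 1} {(0, 1), (1, 0)} k) (redges R {0::nat, 1} {(0, 1), (1, 0)} k)"
      using rv0[OF fg_K1 1(2)] rv0[OF fg_K2 1(2)] 1(1) graph_iso_same by simp
    then show ?thesis using fg_K1 fg_K2 not_iso_K1_K2 by blast
  next
    case 2
    have "graph_iso (rverts R {0::nat, 1} {} k) (redges R {0::nat, 1} {} k)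
        (rverts R {0::nat, 1} {(0, 1), (1, 0)} k) (redges R {0::nat, 1} {(0, 1), (1, 0)} k)"
      using rvTJ1 2 graph_iso_same by simp
    then show ?thesis using fg_2K1 fg_K2 not_iso_2K1_K2 by blast
  next
    case 3
    have "graph_iso (rverts R {0::nat} {} k) (redges R {0::nat} {} k)
        (rverts R {0::nat, 1} {(0, 1), (1, 0)} k) (redges R {0::nat, 1} {(0, 1), (1, 0)} k)"
      using rv_small[OF small_K1 3] rv_small[OF small_K2 3] graph_iso_same by simp
    then show ?thesis using fg_K1 fg_K2 not_iso_K1_K2 by blast
  qed
qed

end
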